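(* For every finite multiset of formulas $\Gamma$ and every formula $\varphi$: the sequent $\Gamma\Rightarrow\varphi$ is derivable in $\mathbf{G3N}$ (resp. $\mathbf{G3NeF}$, $\mathbf{G3CoPC}$, $\mathbf{G3MPC}$) if and only if the equation $\bigwedge\Gamma\to\varphi\approx 1$ is valid in the variety of N-algebras (resp. NeF-algebras, CoPC-algebras, contrapositionally complemented lattices).
   Context: Formulas are generated from a countable set of propositional variables $p,q,\dots$ and the constant $\top$ by the grammar $\varphi::= p\mid\top\mid\varphi\wedge\varphi\mid\varphi\vee\varphi\mid\varphi\to\varphi\mid\neg\varphi$ (there is no constant $\bot$). $\varphi\leftrightarrow\psi$ abbreviates $(\varphi\to\psi)\wedge(\psi\to\varphi)$. A sequent is an expression $\Gamma\Rightarrow\varphi$ where $\Gamma$ is a finite multiset of formulas and $\varphi$ is a formula (the goal); $\Gamma,\Delta$ denotes multiset union and $\Gamma,\alpha$ denotes $\Gamma$ with one more occurrence of $\alpha$. Rules ($p$ a propositional variable): (ax) $\Gamma,p\Rightarrow p$ (no premises); ($\top$) $\Gamma\Rightarrow\top$ (no premises); ($\to$r) from $\Gamma,\alpha\Rightarrow\beta$ infer $\Gamma\Rightarrow\alpha\to\beta$; ($\to$l) from $\Gamma,\alpha\to\beta\Rightarrow\alpha$ and $\Gamma,\beta\Rightarrow\varphi$ infer $\Gamma,\alpha\to\beta\Rightarrow\varphi$; ($\wedge$r) from $\Gamma\Rightarrow\alpha$ and $\Gamma\Rightarrow\beta$ infer $\Gamma\Rightarrow\alpha\wedge\beta$; ($\wedge$l)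 from $\Gamma,\alpha,\beta\Rightarrow\varphi$ infer $\Gamma,\alpha\wedge\beta\Rightarrow\varphi$; ($\vee$r$_1$), ($\vee$r$_2$) from $\Gamma\Rightarrow\alpha$ (resp. $\Gamma\Rightarrow\beta$) infer $\Gamma\Rightarrow\alpha\vee\beta$; ($\vee$l) from $\Gamma,\alpha\Rightarrow\varphi$ and $\Gamma,\beta\Rightarrow\varphi$ infer $\Gamma,\alpha\vee\beta\Rightarrow\varphi$; (n) from $\Gamma,\neg\alpha,\beta\Rightarrow\alpha$ and $\Gamma,\neg\alpha,\alpha\Rightarrow\beta$ infer $\Gamma,\neg\alpha\Rightarrow\neg\beta$; (nef) from $\Gamma,\neg\alpha\Rightarrow\alpha$ infer $\Gamma,\neg\alpha\Rightarrow\neg\beta$; (copc) from $\Gamma,\neg\alpha,\beta\Rightarrow\alpha$ infer $\Gamma,\neg\alpha\Rightarrow\neg\beta$; (an) from $\Gamma,\alpha\Rightarrow\neg\alpha$ infer $\Gamma\Rightarrow\neg\alpha$. The rules (ax) through ($\vee$l) are the positive rules. The four systems are: $\mathbf{G3N}$ = positive rules + (n); $\mathbf{G3NeF}$ = positive rules + (n) + (nef); $\mathbf{G3CoPC}$ = positive rules + (copc); $\mathbf{G3MPC}$ = positive rules + (copc) + (an). None of them contains weakening, contraction or cut as a rule. A derivation is a finite tree of rule instances with leaves instances of (ax) or ($\top$); its height is the number of inference steps on a longest branch. A sequent is derivable if it has a derivation; a formula $\varphi$ is a theorem if $\Rightarrow\varphi$ (empty antecedent) is derivable. Algebraic semantics: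 a relatively pseudo-complemented lattice (Brouwerian algebra) is an algebra $\langle A,\wedge,\vee,\to,1\rangle$ that is a lattice with top element $1$ such that $c\le a\to b$ iff $c\wedge a\le b$ for all $a,b,c$. An N-algebra is an algebra $\langle A,\wedge,\vee,\to,1,\neg\rangle$ whose reduct $\langle A,\wedge,\vee,\to,1\rangle$ is a relatively pseudo-complemented lattice and whose unary operation satisfies $(p\leftrightarrow q)\to(\neg p\leftrightarrow\neg q)\approx 1$. NeF-algebras are N-algebras satisfying $(p\wedge\neg p)\to\neg q\approx1$; CoPC-algebras are N-algebras satisfying $(p\to q)\to(\neg q\to\neg p)\approx 1$; contrapositionally complemented lattices are CoPC-algebras satisfying moreover $(p\to\neg p)\to\neg p\approx 1$. Formulas are interpreted as terms, with $\top$ interpreted as $1$; $\bigwedge\Gamma$ is the conjunction of the formulas in $\Gamma$ (equal to $\top$ if $\Gamma$ is empty). An equation is valid in a variety if it holds under every assignment of the variables in every algebra of the variety. *)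

theory Defs
  imports Main "HOL-Library.Multiset"
begin

datatype form =
    Var nat
  | Top
  | And form form
  | Or form form
  | Imp form form
  | Neg form

definition Iff :: "form \<Rightarrow> form \<Rightarrow> form" where
  "Iff a b = And (Imp a b) (Imp b a)"

datatype system = G3N | G3NeF | G3CoPC | G3MPC

definition has_n :: "system \<Rightarrow> bool" where
  "has_n S \<longleftrightarrow> S = G3N \<or> S = G3NeF"
definition has_nef :: "system \<Rightarrow> bool" where
  "has_nef S \<longleftrightarrow> S = G3NeF"
definition has_copc :: "system \<Rightarrow> bool" where
  "has_copc S \<longleftrightarrow> S = G3CoPC \<or> S = G3MPC"
definition has_an :: "system \<Rightarrow> bool" where
  "has_an S \<longleftrightarrow> S = G3MPC"

inductive derivable :: "system \<Rightarrow> form multiset \<Rightarrow> form \<Rightarrow> bool" for S where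
  ax:   "derivable S (add_mset (Var p) \<Gamma>) (Var p)"
| top:  "derivable S \<Gamma> Top"
| impR: "derivable S (add_mset a \<Gamma>) b \<Longrightarrow> derivable S \<Gamma> (Imp a b)"
| impL: "derivable S (add_mset (Imp a b) \<Gamma>) a \<Longrightarrow> derivable S (add_mset b \<Gamma>) \<phi>
          \<Longrightarrow> derivable S (add_mset (Imp a b) \<Gamma>) \<phi>"
| andR: "derivable S \<Gamma> a \<Longrightarrow> derivable S \<Gamma> b \<Longrightarrow> derivable S \<Gamma> (And a b)"
| andL: "derivable S (add_mset a (add_mset b \<Gamma>)) \<phi> \<Longrightarrow> derivable S (add_mset (And a b) \<Gamma>) \<phi>"
| orR1: "derivable S \<Gamma> a \<Longrightarrow> derivable S \<Gamma> (Or a b)"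
| orR2: "derivable S \<Gamma> b \<Longrightarrow> derivable S \<Gamma> (Or a b)"
| orL:  "derivable S (add_mset a \<Gamma>) \<phi> \<Longrightarrow> derivable S (add_mset b \<Gamma>) \<phi>
          \<Longrightarrow> derivable S (add_mset (Or a b) \<Gamma>) \<phi>"
| n:    "has_n S \<Longrightarrow> derivable S (add_mset (Neg a) (add_mset b \<Gamma>)) a
          \<Longrightarrow> derivable S (add_mset (Neg a) (add_mset a \<Gamma>)) b
          \<Longrightarrow> derivable S (add_mset (Neg a) \<Gamma>) (Neg b)"
| nef:  "has_nef S \<Longrightarrow> derivable S (add_mset (Neg a) \<Gamma>) a
          \<Longrightarrow> derivable S (add_mset (Neg a) \<Gamma>) (Neg b)"
| copc: "has_copc S \<Longrightarrow> derivable S (add_mset (Neg a) (add_mset b \<Gamma>)) a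
          \<Longrightarrow> derivable S (add_mset (Neg a) \<Gamma>) (Neg b)"
| an:   "has_an S \<Longrightarrow> derivable S (add_mset a \<Gamma>) (Neg a) \<Longrightarrow> derivable S \<Gamma> (Neg a)"

record 'a nalg =
  carrier :: "'a set"
  meet :: "'a \<Rightarrow> 'a \<Rightarrow> 'a"
  join :: "'a \<Rightarrow> 'a \<Rightarrow> 'a"
  imp  :: "'a \<Rightarrow> 'a \<Rightarrow> 'a"
  one  :: "'a"
  neg  :: "'a \<Rightarrow> 'a"

definition le :: "'a nalg \<Rightarrow> 'a \<Rightarrow> 'a \<Rightarrow> bool" where
  "le A x y \<longleftrightarrow> meet A x y = x"

definition rpc_lattice :: "'a nalg \<Rightarrow> bool" where
  "rpc_lattice A \<longleftrightarrow>
     one A \<in> carrier A \<and>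
     (\<forall>x\<in>carrier A. \<forall>y\<in>carrier A.
        meet A x y \<in> carrier A \<and> join A x y \<in> carrier A \<and> imp A x y \<in> carrier A) \<and>
     (\<forall>x\<in>carrier A. neg A x \<in> carrier A) \<and>
     (\<forall>x\<in>carrier A. \<forall>y\<in>carrier A. \<forall>z\<in>carrier A.
        meet A x (meet A y z) = meet A (meet A x y) z \<and>
        join A x (join A y z) = join A (join A x y) z) \<and>
     (\<forall>x\<in>carrier A. \<forall>y\<in>carrier A.
        meet A x y = meet A y x \<and> join A x y = join A y x \<and>
        meet A x (join A x y) = x \<and> join A x (meet A x y) = x) \<and>
     (\<forall>x\<in>carrier A. le A x (one A)) \<and>
     (\<forall>a\<in>carrier A. \<forall>b\<in>carrier A. \<forall>c\<in>carrier A.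
        le A c (imp A a b) \<longleftrightarrow> le A (meet A c a) b)"

definition iffA :: "'a nalg \<Rightarrow> 'a \<Rightarrow> 'a \<Rightarrow> 'a" where
  "iffA A x y = meet A (imp A x y) (imp A y x)"

definition N_algebra :: "'a nalg \<Rightarrow> bool" where
  "N_algebra A \<longleftrightarrow> rpc_lattice A \<and>
     (\<forall>p\<in>carrier A. \<forall>q\<in>carrier A.
        imp A (iffA A p q) (iffA A (neg A p) (neg A q)) = one A)"

definition NeF_algebra :: "'a nalg \<Rightarrow> bool" where
  "NeF_algebra A \<longleftrightarrow> N_algebra A \<and>
     (\<forall>p\<in>carrier A. \<forall>q\<in>carrier A. imp A (meet A p (neg A p)) (neg A q) = one A)"

definition CoPC_algebra :: "'a nalg \<Rightarrow> bool" where
  "CoPC_algebra A \<longleftrightarrow> N_algebra A \<and>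
     (\<forall>p\<in>carrier A. \<forall>q\<in>carrier A.
        imp A (imp A p q) (imp A (neg A q) (neg A p)) = one A)"

definition CC_lattice :: "'a nalg \<Rightarrow> bool" where
  "CC_lattice A \<longleftrightarrow> CoPC_algebra A \<and>
     (\<forall>p\<in>carrier A. imp A (imp A p (neg A p)) (neg A p) = one A)"

fun variety :: "system \<Rightarrow> 'a nalg \<Rightarrow> bool" where
  "variety G3N A = N_algebra A"
| "variety G3NeF A = NeF_algebra A"
| "variety G3CoPC A = CoPC_algebra A"
| "variety G3MPC A = CC_lattice A"

fun eval :: "'a nalg \<Rightarrow> (nat \<Rightarrow> 'a) \<Rightarrow> form \<Rightarrow> 'a" where
  "eval A v (Var p) = v p"
| "eval A v Top = one A"
| "eval A v (And a b) = meet A (eval A v a) (eval A v b)"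
| "eval A v (Or a b) = join A (eval A v a) (eval A v b)"
| "eval A v (Imp a b) = imp A (eval A v a) (eval A v b)"
| "eval A v (Neg a) = neg A (eval A v a)"

text \<open>Big conjunction of a multiset (Top if empty); the listing order is arbitrary,
  which is irrelevant up to the lattice laws.\<close>
fun conj_list :: "form list \<Rightarrow> form" where
  "conj_list [] = Top"
| "conj_list [a] = a"
| "conj_list (a # b # xs) = And a (conj_list (b # xs))"

definition big_conj :: "form multiset \<Rightarrow> form" where
  "big_conj \<Gamma> = conj_list (SOME xs. mset xs = \<Gamma>)"

text \<open>The equation phi ~ 1 is valid in the variety of S, ranging over all algebras
  whose carrier lives in type 'a.\<close>
definition valid :: "'a itself \<Rightarrow> system \<Rightarrow> form \<Rightarrow> bool" where
  "valid _ S \<phi> \<longleftrightarrow>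
     (\<forall>A :: 'a nalg. \<forall>v. variety S A \<longrightarrow> (\<forall>p. v p \<in> carrier A) \<longrightarrow> eval A v \<phi> = one A)"

end

theory Submission
  imports Defs "HOL-Library.Countable"
begin


inductive dh :: "system \<Rightarrow> nat \<Rightarrow> form multiset \<Rightarrow> form \<Rightarrow> bool" for S where
  hax:   "dh S n (add_mset (Var p) \<Gamma>) (Var p)"
| htop:  "dh S n \<Gamma> Top"
| himpR: "dh S n (add_mset a \<Gamma>) b \<Longrightarrow> dh S (Suc n) \<Gamma> (Imp a b)"
| himpL: "dh S n (add_mset (Imp a b) \<Gamma>) a \<Longrightarrow> dh S n (add_mset b \<Gamma>) \<phi>
          \<Longrightarrow> dh S (Suc n) (add_mset (Imp a b) \<Gamma>) \<phi>"
| handR: "dh S n \<Gamma> a \<Longrightarrow> dh S n \<Gamma> b \<Longrightarrow> dh S (Suc n) \<Gamma> (And a b)"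
| handL: "dh S n (add_mset a (add_mset b \<Gamma>)) \<phi> \<Longrightarrow> dh S (Suc n) (add_mset (And a b) \<Gamma>) \<phi>"
| horR1: "dh S n \<Gamma> a \<Longrightarrow> dh S (Suc n) \<Gamma> (Or a b)"
| horR2: "dh S n \<Gamma> b \<Longrightarrow> dh S (Suc n) \<Gamma> (Or a b)"
| horL:  "dh S n (add_mset a \<Gamma>) \<phi> \<Longrightarrow> dh S n (add_mset b \<Gamma>) \<phi>
          \<Longrightarrow> dh S (Suc n) (add_mset (Or a b) \<Gamma>) \<phi>"
| hn:    "has_n S \<Longrightarrow> dh S n (add_mset (Neg a) (add_mset b \<Gamma>)) a
          \<Longrightarrow> dh S n (add_mset (Neg a) (add_mset a \<Gamma>)) b
          \<Longrightarrow> dh S (Suc n) (add_mset (Neg a) \<Gamma>) (Neg b)"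
| hnef:  "has_nef S \<Longrightarrow> dh S n (add_mset (Neg a) \<Gamma>) a
          \<Longrightarrow> dh S (Suc n) (add_mset (Neg a) \<Gamma>) (Neg b)"
| hcopc: "has_copc S \<Longrightarrow> dh S n (add_mset (Neg a) (add_mset b \<Gamma>)) a
          \<Longrightarrow> dh S (Suc n) (add_mset (Neg a) \<Gamma>) (Neg b)"
| han:   "has_an S \<Longrightarrow> dh S n (add_mset a \<Gamma>) (Neg a) \<Longrightarrow> dh S (Suc n) \<Gamma> (Neg a)"

lemma dh_mono: "dh S n \<Gamma> \<phi> \<Longrightarrow> n \<le> m \<Longrightarrow> dh S m \<Gamma> \<phi>"
  apply (induction arbitrary: m rule: dh.induct)
  apply (case_tac [!] m)
  apply (auto intro: dh.intros)
  done

lemma dh_derivable: "dh S n \<Gamma> \<phi> \<Longrightarrow> derivable S \<Gamma> \<phi>"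
  by (induction rule: dh.induct) (auto intro: derivable.intros)

lemma derivable_dh: "derivable S \<Gamma> \<phi> \<Longrightarrow> \<exists>n. dh S n \<Gamma> \<phi>"
proof (induction rule: derivable.induct)
  case (impL a b \<Gamma> \<phi>)
  then obtain n m where "dh S n (add_mset (Imp a b) \<Gamma>) a" "dh S m (add_mset b \<Gamma>) \<phi>" by blast
  then show ?case by (meson dh.himpL dh_mono max.cobounded1 max.cobounded2)
next
  case (andR \<Gamma> a b)
  then obtain n m where "dh S n \<Gamma> a" "dh S m \<Gamma> b" by blast
  then show ?case by (meson dh.handR dh_mono max.cobounded1 max.cobounded2)
next
  case (orL a \<Gamma> \<phi> b)
  then obtain n m where "dh S n (add_mset a \<Gamma>) \<phi>" "dh S m (add_mset b \<Gamma>) \<phi>" by blast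
  then show ?case by (meson dh.horL dh_mono max.cobounded1 max.cobounded2)
next
  case (n a b \<Gamma>)
  then obtain n m where "dh S n (add_mset (Neg a) (add_mset b \<Gamma>)) a" "dh S m (add_mset (Neg a) (add_mset a \<Gamma>)) b" by blast
  then show ?case using n(1) by (meson dh.hn dh_mono max.cobounded1 max.cobounded2)
qed (auto intro: dh.intros)

lemma derivable_iff: "derivable S \<Gamma> \<phi> \<longleftrightarrow> (\<exists>n. dh S n \<Gamma> \<phi>)"
  using dh_derivable derivable_dh by blast

lemma msplit: "add_mset x M = add_mset y N \<Longrightarrow> x \<noteq> y \<Longrightarrow> \<exists>K. M = add_mset y K \<and> N = add_mset x K"
  by (metis add_eq_conv_ex)

lemma weak: "dh S n \<Gamma> \<phi> \<Longrightarrow> dh S n (add_mset x \<Gamma>) \<phi>"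
proof (induction rule: dh.induct)
qed (auto intro: dh.intros simp: add_mset_commute[of x])

definition invp :: "system \<Rightarrow> nat \<Rightarrow> form \<Rightarrow> form multiset \<Rightarrow> form \<Rightarrow> bool" where
  "invp S n P \<Gamma> \<phi> \<longleftrightarrow>
     (\<forall>c d. P = And c d \<longrightarrow> dh S n (add_mset c (add_mset d \<Gamma>)) \<phi>) \<and>
     (\<forall>c d. P = Or c d \<longrightarrow> dh S n (add_mset c \<Gamma>) \<phi> \<and> dh S n (add_mset d \<Gamma>) \<phi>) \<and>
     (\<forall>c d. P = Imp c d \<longrightarrow> dh S n (add_mset d \<Gamma>) \<phi>) \<and>
     (P = Top \<longrightarrow> dh S n \<Gamma> \<phi>)"

lemma tr0: "(\<And>\<Delta>. dh S m (Y + \<Delta>) \<phi>) \<Longrightarrow> invp S m P (Y + \<Gamma>) \<phi>"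
  unfolding invp_def by (metis union_mset_add_mset_right)

lemma tr1: "invp S n P (X + \<Gamma>) \<psi> \<Longrightarrow> (\<And>\<Delta>. dh S n (X + \<Delta>) \<psi> \<Longrightarrow> dh S m (Y + \<Delta>) \<phi>)
   \<Longrightarrow> invp S m P (Y + \<Gamma>) \<phi>"
  unfolding invp_def by (metis union_mset_add_mset_right)

lemma tr2: "invp S n P (X1 + \<Gamma>) \<psi>1 \<Longrightarrow> invp S n P (X2 + \<Gamma>) \<psi>2 \<Longrightarrow>
   (\<And>\<Delta>. dh S n (X1 + \<Delta>) \<psi>1 \<Longrightarrow> dh S n (X2 + \<Delta>) \<psi>2 \<Longrightarrow> dh S m (Y + \<Delta>) \<phi>)
   \<Longrightarrow> invp S m P (Y + \<Gamma>) \<phi>"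
  unfolding invp_def by (metis union_mset_add_mset_right)

lemma inv_main: "dh S n \<Delta> \<phi> \<Longrightarrow> \<Delta> = add_mset P \<Gamma> \<Longrightarrow> invp S n P \<Gamma> \<phi>"
proof (induction arbitrary: \<Gamma> rule: dh.induct)
  case (hax n p \<Gamma>0)
  show ?case
  proof (cases "P = Var p")
    case True thus ?thesis by (simp add: invp_def)
  next
    case False
    with hax.prems obtain K where "\<Gamma> = add_mset (Var p) K" by (metis msplit)
    then show ?thesis using tr0[of S n "{#Var p#}" "Var p" P K] by (simp add: dh.hax)
  qed
next
  case (htop n \<Gamma>0)
  then show ?case using tr0[of S n "{#}" Top P \<Gamma>] by (simp add: dh.htop)
next
  case (himpR n a \<Gamma>0 b)
  have "invp S n P ({#a#} + \<Gamma>) b" using himpR by (simp add: add_mset_commute)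
  then show ?case using tr1[of S n P "{#a#}" \<Gamma> b "Suc n" "{#}" "Imp a b"] by (simp add: dh.himpR)
next
  case (himpL n a b \<Gamma>0 \<phi>)
  show ?case
  proof (cases "P = Imp a b")
    case True thus ?thesis using himpL by (simp add: invp_def dh_mono)
  next
    case False
    with himpL.prems obtain K where K: "\<Gamma>0 = add_mset P K" "\<Gamma> = add_mset (Imp a b) K" by (metis msplit)
    have 1: "invp S n P ({#Imp a b#} + K) a" using himpL K by (simp add: add_mset_commute)
    have 2: "invp S n P ({#b#} + K) \<phi>" using himpL K by (simp add: add_mset_commute)
    show ?thesis using tr2[OF 1 2, of "Suc n" "{#Imp a b#}" \<phi>] K by (simp add: dh.himpL)
  qed
next
  case (handR n \<Gamma>0 a b)
  have 1: "invp S n P ({#} + \<Gamma>) a" using handR by simp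
  have 2: "invp S n P ({#} + \<Gamma>) b" using handR by simp
  show ?case using tr2[OF 1 2, of "Suc n" "{#}" "And a b"] by (simp add: dh.handR)
next
  case (handL n a b \<Gamma>0 \<phi>)
  show ?case
  proof (cases "P = And a b")
    case True thus ?thesis using handL by (simp add: invp_def dh_mono)
  next
    case False
    with handL.prems obtain K where K: "\<Gamma>0 = add_mset P K" "\<Gamma> = add_mset (And a b) K" by (metis msplit)
    have 1: "invp S n P ({#a, b#} + K) \<phi>" using handL K by (simp add: add_mset_commute)
    show ?thesis using tr1[OF 1, of "Suc n" "{#And a b#}" \<phi>] K by (simp add: dh.handL)
  qed
next
  case (horR1 n \<Gamma>0 a b)
  have 1: "invp S n P ({#} + \<Gamma>) a" using horR1 by simp
  show ?case using tr1[OF 1, of "Suc n" "{#}" "Or a b"] by (simp add: dh.horR1)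
next
  case (horR2 n \<Gamma>0 b a)
  have 1: "invp S n P ({#} + \<Gamma>) b" using horR2 by simp
  show ?case using tr1[OF 1, of "Suc n" "{#}" "Or a b"] by (simp add: dh.horR2)
next
  case (horL n a \<Gamma>0 \<phi> b)
  show ?case
  proof (cases "P = Or a b")
    case True thus ?thesis using horL by (simp add: invp_def dh_mono)
  next
    case False
    with horL.prems obtain K where K: "\<Gamma>0 = add_mset P K" "\<Gamma> = add_mset (Or a b) K" by (metis msplit)
    have 1: "invp S n P ({#a#} + K) \<phi>" using horL K by (simp add: add_mset_commute)
    have 2: "invp S n P ({#b#} + K) \<phi>" using horL K by (simp add: add_mset_commute)
    show ?thesis using tr2[OF 1 2, of "Suc n" "{#Or a b#}" \<phi>] K by (simp add: dh.horL)
  qed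
next
  case (hn n a b \<Gamma>0)
  show ?case
  proof (cases "P = Neg a")
    case True thus ?thesis by (simp add: invp_def)
  next
    case False
    with hn.prems obtain K where K: "\<Gamma>0 = add_mset P K" "\<Gamma> = add_mset (Neg a) K" by (metis msplit)
    have 1: "invp S n P ({#Neg a, b#} + K) a" using hn K by (simp add: add_mset_commute)
    have 2: "invp S n P ({#Neg a, a#} + K) b" using hn K by (simp add: add_mset_commute)
    show ?thesis using tr2[OF 1 2, of "Suc n" "{#Neg a#}" "Neg b"] K hn(1) by (simp add: dh.hn)
  qed
next
  case (hnef n a \<Gamma>0 b)
  show ?case
  proof (cases "P = Neg a")
    case True thus ?thesis by (simp add: invp_def)
  next
    case False
    with hnef.prems obtain K where K: "\<Gamma>0 = add_mset P K" "\<Gamma> = add_mset (Neg a) K" by (metis msplit)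
    have 1: "invp S n P ({#Neg a#} + K) a" using hnef K by (simp add: add_mset_commute)
    show ?thesis using tr1[OF 1, of "Suc n" "{#Neg a#}" "Neg b"] K hnef(1) by (simp add: dh.hnef)
  qed
next
  case (hcopc n a b \<Gamma>0)
  show ?case
  proof (cases "P = Neg a")
    case True thus ?thesis by (simp add: invp_def)
  next
    case False
    with hcopc.prems obtain K where K: "\<Gamma>0 = add_mset P K" "\<Gamma> = add_mset (Neg a) K" by (metis msplit)
    have 1: "invp S n P ({#Neg a, b#} + K) a" using hcopc K by (simp add: add_mset_commute)
    show ?thesis using tr1[OF 1, of "Suc n" "{#Neg a#}" "Neg b"] K hcopc(1) by (simp add: dh.hcopc)
  qed
next
  case (han n a \<Gamma>0)
  have 1: "invp S n P ({#a#} + \<Gamma>) (Neg a)" using han by (simp add: add_mset_commute)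
  show ?case using tr1[OF 1, of "Suc n" "{#}" "Neg a"] han(1) by (simp add: dh.han)
qed

lemma inv_and: "dh S n (add_mset (And a b) \<Gamma>) \<phi> \<Longrightarrow> dh S n (add_mset a (add_mset b \<Gamma>)) \<phi>"
  using inv_main[of S n _ \<phi> "And a b" \<Gamma>] by (simp add: invp_def)
lemma inv_or1: "dh S n (add_mset (Or a b) \<Gamma>) \<phi> \<Longrightarrow> dh S n (add_mset a \<Gamma>) \<phi>"
  using inv_main[of S n _ \<phi> "Or a b" \<Gamma>] by (simp add: invp_def)
lemma inv_or2: "dh S n (add_mset (Or a b) \<Gamma>) \<phi> \<Longrightarrow> dh S n (add_mset b \<Gamma>) \<phi>"
  using inv_main[of S n _ \<phi> "Or a b" \<Gamma>] by (simp add: invp_def)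
lemma inv_imp: "dh S n (add_mset (Imp a b) \<Gamma>) \<phi> \<Longrightarrow> dh S n (add_mset b \<Gamma>) \<phi>"
  using inv_main[of S n _ \<phi> "Imp a b" \<Gamma>] by (simp add: invp_def)
lemma inv_top: "dh S n (add_mset Top \<Gamma>) \<phi> \<Longrightarrow> dh S n \<Gamma> \<phi>"
  using inv_main[of S n _ \<phi> "Top" \<Gamma>] by (simp add: invp_def)

lemma msplit2: "add_mset Q \<Gamma>0 = add_mset A (add_mset A \<Gamma>) \<Longrightarrow> Q \<noteq> A \<Longrightarrow>
   \<exists>K. \<Gamma>0 = add_mset A (add_mset A K) \<and> \<Gamma> = add_mset Q K"
  by (metis msplit)

lemma contr: "dh S n (add_mset A (add_mset A \<Gamma>)) \<phi> \<Longrightarrow> dh S n (add_mset A \<Gamma>) \<phi>"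
proof (induction n arbitrary: A \<Gamma> \<phi> rule: less_induct)
  case (less n)
  have IH: "\<And>m A \<Gamma> \<phi>. m < n \<Longrightarrow> dh S m (add_mset A (add_mset A \<Gamma>)) \<phi> \<Longrightarrow> dh S m (add_mset A \<Gamma>) \<phi>"
    using less.IH by blast
  from less.prems show ?case
  proof (cases rule: dh.cases)
    case (hax p \<Gamma>0)
    show ?thesis
    proof (cases "A = Var p")
      case True thus ?thesis using hax(2) dh.hax by simp
    next
      case False
      then obtain K where "\<Gamma> = add_mset (Var p) K" using hax msplit2 by metis
      thus ?thesis using hax dh.hax[of S n p "add_mset A K"] by (simp add: add_mset_commute)
    qed
  next
    case (htop)
    then show ?thesis by (simp add: dh.htop)
  next
    case (himpR m a b)
    have "dh S m (add_mset A (add_mset A (add_mset a \<Gamma>))) b" using himpR by (simp add: add_mset_commute)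
    then have "dh S m (add_mset A (add_mset a \<Gamma>)) b" using IH himpR by simp
    then show ?thesis using himpR by (simp add: add_mset_commute dh.himpR)
  next
    case (himpL m a b \<Gamma>0)
    show ?thesis
    proof (cases "A = Imp a b")
      case True
      then have e: "\<Gamma>0 = add_mset A \<Gamma>" using himpL by simp
      have 1: "dh S m (add_mset A \<Gamma>) a" using IH himpL e by simp
      have "dh S m (add_mset b (add_mset A \<Gamma>)) \<phi>" using himpL e by simp
      then have "dh S m (add_mset b (add_mset b \<Gamma>)) \<phi>" using True inv_imp by (metis add_mset_commute)
      then have 2: "dh S m (add_mset b \<Gamma>) \<phi>" using IH himpL by simp
      show ?thesis using dh.himpL[OF 1[unfolded True] 2] True himpL by simp
    next
      case False
      then obtain K where K: "\<Gamma>0 = add_mset A (add_mset A K)" "\<Gamma> = add_mset (Imp a b) K"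
        using himpL msplit2 by metis
      have 1: "dh S m (add_mset A (add_mset A (add_mset (Imp a b) K))) a" using himpL K by (simp add: add_mset_commute)
      have 2: "dh S m (add_mset A (add_mset A (add_mset b K))) \<phi>" using himpL K by (simp add: add_mset_commute)
      have h1: "dh S m (add_mset (Imp a b) (add_mset A K)) a" using IH[OF _ 1] himpL by (simp add: add_mset_commute)
      have h2: "dh S m (add_mset b (add_mset A K)) \<phi>" using IH[OF _ 2] himpL by (simp add: add_mset_commute)
      show ?thesis using dh.himpL[OF h1 h2] K himpL by (simp add: add_mset_commute)
    qed
  next
    case (handR m a b)
    then show ?thesis using IH by (simp add: dh.handR)
  next
    case (handL m a b \<Gamma>0)
    show ?thesis
    proof (cases "A = And a b")
      case True
      then have e: "\<Gamma>0 = add_mset A \<Gamma>" using handL by simp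
      have "dh S m (add_mset a (add_mset b (add_mset (And a b) \<Gamma>))) \<phi>" using handL e True by simp
      then have "dh S m (add_mset (And a b) (add_mset a (add_mset b \<Gamma>))) \<phi>" by (simp add: add_mset_commute)
      then have "dh S m (add_mset a (add_mset b (add_mset a (add_mset b \<Gamma>)))) \<phi>" by (rule inv_and)
      then have "dh S m (add_mset a (add_mset a (add_mset b (add_mset b \<Gamma>)))) \<phi>" by (simp add: add_mset_commute)
      then have "dh S m (add_mset a (add_mset b (add_mset b \<Gamma>))) \<phi>" using IH handL by simp
      then have "dh S m (add_mset b (add_mset b (add_mset a \<Gamma>))) \<phi>" by (simp add: add_mset_commute)
      then have "dh S m (add_mset b (add_mset a \<Gamma>)) \<phi>" using IH handL by simp
      then show ?thesis using dh.handL[of S m a b \<Gamma>] True handL by (simp add: add_mset_commute)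
    next
      case False
      then obtain K where K: "\<Gamma>0 = add_mset A (add_mset A K)" "\<Gamma> = add_mset (And a b) K"
        using handL msplit2 by metis
      have 1: "dh S m (add_mset A (add_mset A (add_mset a (add_mset b K)))) \<phi>" using handL K by (simp add: add_mset_commute)
      have h1: "dh S m (add_mset a (add_mset b (add_mset A K))) \<phi>" using IH[OF _ 1] handL by (simp add: add_mset_commute)
      show ?thesis using dh.handL[OF h1] K handL by (simp add: add_mset_commute)
    qed
  next
    case (horR1 m a b)
    then show ?thesis using IH by (simp add: dh.horR1)
  next
    case (horR2 m b a)
    then show ?thesis using IH by (simp add: dh.horR2)
  next
    case (horL m a \<Gamma>0 b)
    show ?thesis
    proof (cases "A = Or a b")
      case True
      then have e: "\<Gamma>0 = add_mset A \<Gamma>" using horL by simp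
      have "dh S m (add_mset a (add_mset (Or a b) \<Gamma>)) \<phi>" using horL e True by simp
      then have "dh S m (add_mset (Or a b) (add_mset a \<Gamma>)) \<phi>" by (simp add: add_mset_commute)
      then have "dh S m (add_mset a (add_mset a \<Gamma>)) \<phi>" by (rule inv_or1)
      then have 1: "dh S m (add_mset a \<Gamma>) \<phi>" using IH horL by simp
      have "dh S m (add_mset b (add_mset (Or a b) \<Gamma>)) \<phi>" using horL e True by simp
      then have "dh S m (add_mset (Or a b) (add_mset b \<Gamma>)) \<phi>" by (simp add: add_mset_commute)
      then have "dh S m (add_mset b (add_mset b \<Gamma>)) \<phi>" by (rule inv_or2)
      then have 2: "dh S m (add_mset b \<Gamma>) \<phi>" using IH horL by simp
      show ?thesis using dh.horL[OF 1 2] True horL by simp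
    next
      case False
      then obtain K where K: "\<Gamma>0 = add_mset A (add_mset A K)" "\<Gamma> = add_mset (Or a b) K"
        using horL msplit2 by metis
      have 1: "dh S m (add_mset A (add_mset A (add_mset a K))) \<phi>" using horL K by (simp add: add_mset_commute)
      have 2: "dh S m (add_mset A (add_mset A (add_mset b K))) \<phi>" using horL K by (simp add: add_mset_commute)
      have h1: "dh S m (add_mset a (add_mset A K)) \<phi>" using IH[OF _ 1] horL by (simp add: add_mset_commute)
      have h2: "dh S m (add_mset b (add_mset A K)) \<phi>" using IH[OF _ 2] horL by (simp add: add_mset_commute)
      show ?thesis using dh.horL[OF h1 h2] K horL by (simp add: add_mset_commute)
    qed
  next
    case (hn m a b \<Gamma>0)
    have hs: "has_n S" using hn by simp
    show ?thesis
    proof (cases "A = Neg a")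
      case True
      then have e: "\<Gamma>0 = add_mset A \<Gamma>" using hn by simp
      have 1: "dh S m (add_mset (Neg a) (add_mset (Neg a) (add_mset b \<Gamma>))) a" using hn e True by (simp add: add_mset_commute)
      have 2: "dh S m (add_mset (Neg a) (add_mset (Neg a) (add_mset a \<Gamma>))) b" using hn e True by (simp add: add_mset_commute)
      show ?thesis using dh.hn[OF hs IH[OF _ 1] IH[OF _ 2]] True hn by simp
    next
      case False
      then obtain K where K: "\<Gamma>0 = add_mset A (add_mset A K)" "\<Gamma> = add_mset (Neg a) K"
        using hn msplit2 by metis
      have 1: "dh S m (add_mset A (add_mset A (add_mset (Neg a) (add_mset b K)))) a" using hn K by (simp add: add_mset_commute)
      have 2: "dh S m (add_mset A (add_mset A (add_mset (Neg a) (add_mset a K)))) b" using hn K by (simp add: add_mset_commute)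
      have h1: "dh S m (add_mset (Neg a) (add_mset b (add_mset A K))) a" using IH[OF _ 1] hn by (simp add: add_mset_commute)
      have h2: "dh S m (add_mset (Neg a) (add_mset a (add_mset A K))) b" using IH[OF _ 2] hn by (simp add: add_mset_commute)
      show ?thesis using dh.hn[OF hs h1 h2] K hn by (simp add: add_mset_commute)
    qed
  next
    case (hnef m a \<Gamma>0 b)
    have hs: "has_nef S" using hnef by simp
    show ?thesis
    proof (cases "A = Neg a")
      case True
      then have e: "\<Gamma>0 = add_mset A \<Gamma>" using hnef by simp
      have 1: "dh S m (add_mset (Neg a) (add_mset (Neg a) \<Gamma>)) a" using hnef e True by (simp add: add_mset_commute)
      show ?thesis using dh.hnef[OF hs IH[OF _ 1]] True hnef by simp
    next
      case False
      then obtain K where K: "\<Gamma>0 = add_mset A (add_mset A K)" "\<Gamma> = add_mset (Neg a) K"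
        using hnef msplit2 by metis
      have 1: "dh S m (add_mset A (add_mset A (add_mset (Neg a) K))) a" using hnef K by (simp add: add_mset_commute)
      have h1: "dh S m (add_mset (Neg a) (add_mset A K)) a" using IH[OF _ 1] hnef by (simp add: add_mset_commute)
      show ?thesis using dh.hnef[OF hs h1] K hnef by (simp add: add_mset_commute)
    qed
  next
    case (hcopc m a b \<Gamma>0)
    have hs: "has_copc S" using hcopc by simp
    show ?thesis
    proof (cases "A = Neg a")
      case True
      then have e: "\<Gamma>0 = add_mset A \<Gamma>" using hcopc by simp
      have 1: "dh S m (add_mset (Neg a) (add_mset (Neg a) (add_mset b \<Gamma>))) a" using hcopc e True by (simp add: add_mset_commute)
      show ?thesis using dh.hcopc[OF hs IH[OF _ 1]] True hcopc by simp
    next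
      case False
      then obtain K where K: "\<Gamma>0 = add_mset A (add_mset A K)" "\<Gamma> = add_mset (Neg a) K"
        using hcopc msplit2 by metis
      have 1: "dh S m (add_mset A (add_mset A (add_mset (Neg a) (add_mset b K)))) a" using hcopc K by (simp add: add_mset_commute)
      have h1: "dh S m (add_mset (Neg a) (add_mset b (add_mset A K))) a" using IH[OF _ 1] hcopc by (simp add: add_mset_commute)
      show ?thesis using dh.hcopc[OF hs h1] K hcopc by (simp add: add_mset_commute)
    qed
  next
    case (han m a)
    have "dh S m (add_mset A (add_mset A (add_mset a \<Gamma>))) (Neg a)" using han by (simp add: add_mset_commute)
    then have "dh S m (add_mset A (add_mset a \<Gamma>)) (Neg a)" using IH han by simp
    then show ?thesis using han by (simp add: add_mset_commute dh.han)
  qed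
qed

lemma dweak: "derivable S \<Gamma> \<phi> \<Longrightarrow> derivable S (add_mset x \<Gamma>) \<phi>"
  using derivable_iff weak by metis

lemma dcontr: "derivable S (add_mset A (add_mset A \<Gamma>)) \<phi> \<Longrightarrow> derivable S (add_mset A \<Gamma>) \<phi>"
  using derivable_iff contr by metis

definition lastR :: "system \<Rightarrow> nat \<Rightarrow> form multiset \<Rightarrow> form \<Rightarrow> bool" where
 "lastR S n \<Gamma> A \<longleftrightarrow>
  (\<exists>c d n'. A = Imp c d \<and> dh S n' (add_mset c \<Gamma>) d) \<or>
  (\<exists>c d n'. A = And c d \<and> dh S n' \<Gamma> c \<and> dh S n' \<Gamma> d) \<or>
  (\<exists>c d n'. A = Or c d \<and> (dh S n' \<Gamma> c \<or> dh S n' \<Gamma> d)) \<or>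
  (\<exists>a b n' \<Gamma>'. A = Neg b \<and> \<Gamma> = add_mset (Neg a) \<Gamma>' \<and> has_n S \<and>
      dh S n' (add_mset (Neg a) (add_mset b \<Gamma>')) a \<and> dh S n' (add_mset (Neg a) (add_mset a \<Gamma>')) b) \<or>
  (\<exists>a b n' \<Gamma>'. A = Neg b \<and> \<Gamma> = add_mset (Neg a) \<Gamma>' \<and> has_nef S \<and> dh S n' \<Gamma> a) \<or>
  (\<exists>a b n' \<Gamma>'. A = Neg b \<and> \<Gamma> = add_mset (Neg a) \<Gamma>' \<and> has_copc S \<and> dh S n' (add_mset b \<Gamma>) a) \<or>
  (\<exists>b n'. A = Neg b \<and> n = Suc n' \<and> has_an S \<and> dh S n' (add_mset b \<Gamma>) (Neg b))"

lemma lastR_shape: "lastR S n \<Gamma> A \<Longrightarrow> (\<exists>c d. A = Imp c d \<or> A = And c d \<or> A = Or c d) \<or> (\<exists>b. A = Neg b)"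
  unfolding lastR_def by blast

lemma sys_facts: "has_n S \<Longrightarrow> \<not> has_copc S" "has_n S \<Longrightarrow> \<not> has_an S"
  "has_nef S \<Longrightarrow> \<not> has_copc S" "has_nef S \<Longrightarrow> \<not> has_an S"
  by (auto simp: has_n_def has_nef_def has_copc_def has_an_def)

definition sub :: "form \<Rightarrow> form \<Rightarrow> bool" where
  "sub B A \<longleftrightarrow> (\<exists>c. A = And B c \<or> A = And c B \<or> A = Or B c \<or> A = Or c B \<or> A = Imp B c \<or> A = Imp c B) \<or> A = Neg B"

lemma right_analysis:
  assumes IH: "\<And>n' m' \<Gamma>' C'. n' + m' < n + m \<Longrightarrow> dh S n' \<Gamma>' A \<Longrightarrow> dh S m' (add_mset A \<Gamma>') C' \<Longrightarrow> derivable S \<Gamma>' C'"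
    and FIH: "\<And>B \<Gamma>' C'. sub B A \<Longrightarrow> derivable S \<Gamma>' B \<Longrightarrow> derivable S (add_mset B \<Gamma>') C' \<Longrightarrow> derivable S \<Gamma>' C'"
    and L: "dh S n \<Gamma> A" and LR: "lastR S n \<Gamma> A" and R: "dh S m (add_mset A \<Gamma>) C"
  shows "derivable S \<Gamma> C"
  using R
proof (cases rule: dh.cases)
  case (hax p \<Gamma>1)
  have "A \<noteq> Var p" using lastR_shape[OF LR] by auto
  then obtain K where "\<Gamma> = add_mset (Var p) K" using hax(1) msplit by metis
  then show ?thesis using hax(2) derivable.ax by simp
next
  case htop
  then show ?thesis by (simp add: derivable.top)
next
  case (himpR m' c d)
  have l: "dh S n (add_mset c \<Gamma>) A" using L weak by blast
  have r: "dh S m' (add_mset A (add_mset c \<Gamma>)) d" using himpR by (simp add: add_mset_commute)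
  have "derivable S (add_mset c \<Gamma>) d" using IH[OF _ l r] himpR by simp
  then show ?thesis using himpR derivable.impR by simp
next
  case (himpL m' c d \<Gamma>1)
  show ?thesis
  proof (cases "A = Imp c d")
    case True
    then have e: "\<Gamma>1 = \<Gamma>" using himpL by simp
    have r1: "dh S m' (add_mset A \<Gamma>) c" using himpL True e by simp
    have 1: "derivable S \<Gamma> c" using IH[OF _ L r1] himpL by simp
    obtain n' where "dh S n' (add_mset c \<Gamma>) d" using LR True unfolding lastR_def by auto
    then have "derivable S \<Gamma> d" using FIH[of c \<Gamma> d] 1 True dh_derivable unfolding sub_def by blast
    moreover have "derivable S (add_mset d \<Gamma>) C" using himpL e dh_derivable by metis
    ultimately show ?thesis using FIH[of d \<Gamma> C] True unfolding sub_def by blast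
  next
    case False
    then obtain K where K: "\<Gamma>1 = add_mset A K" "\<Gamma> = add_mset (Imp c d) K" using himpL(2) msplit by metis
    have r1: "dh S m' (add_mset A \<Gamma>) c" using himpL K by (simp add: add_mset_commute)
    have 1: "derivable S \<Gamma> c" using IH[OF _ L r1] himpL by simp
    have l2: "dh S n (add_mset d K) A" using L K inv_imp by metis
    have r2: "dh S m' (add_mset A (add_mset d K)) C" using himpL K by (simp add: add_mset_commute)
    have 2: "derivable S (add_mset d K) C" using IH[OF _ l2 r2] himpL by simp
    show ?thesis using derivable.impL[of S c d K C] 1 2 K by simp
  qed
next
  case (handR m' c d)
  then show ?thesis using IH[OF _ L handR(3)] IH[OF _ L handR(4)] derivable.andR by simp
next
  case (handL m' c d \<Gamma>1)
  show ?thesis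
  proof (cases "A = And c d")
    case True
    then have e: "\<Gamma>1 = \<Gamma>" using handL by simp
    obtain n' where l1: "dh S n' \<Gamma> c" and l2: "dh S n' \<Gamma> d" using LR True unfolding lastR_def by auto
    have "derivable S (add_mset d \<Gamma>) c" using l1 dh_derivable dweak by blast
    moreover have "derivable S (add_mset c (add_mset d \<Gamma>)) C" using handL e dh_derivable by metis
    ultimately have "derivable S (add_mset d \<Gamma>) C" using FIH True unfolding sub_def by blast
    then show ?thesis using FIH[of d \<Gamma> C] True l2 dh_derivable unfolding sub_def by blast
  next
    case False
    then obtain K where K: "\<Gamma>1 = add_mset A K" "\<Gamma> = add_mset (And c d) K" using handL(2) msplit by metis
    have l: "dh S n (add_mset c (add_mset d K)) A" using L K inv_and by metis
    have r: "dh S m' (add_mset A (add_mset c (add_mset d K))) C" using handL K by (simp add: add_mset_commute)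
    have "derivable S (add_mset c (add_mset d K)) C" using IH[OF _ l r] handL by simp
    then show ?thesis using derivable.andL K by simp
  qed
next
  case (horR1 m' c d)
  then show ?thesis using IH[OF _ L horR1(3)] derivable.orR1 by simp
next
  case (horR2 m' d c)
  then show ?thesis using IH[OF _ L horR2(3)] derivable.orR2 by simp
next
  case (horL m' c \<Gamma>1 d)
  show ?thesis
  proof (cases "A = Or c d")
    case True
    then have e: "\<Gamma>1 = \<Gamma>" using horL by simp
    obtain n' where "dh S n' \<Gamma> c \<or> dh S n' \<Gamma> d" using LR True unfolding lastR_def by auto
    moreover have "derivable S (add_mset c \<Gamma>) C" using horL e dh_derivable by metis
    moreover have "derivable S (add_mset d \<Gamma>) C" using horL e dh_derivable by metis
    ultimately show ?thesis using FIH True dh_derivable unfolding sub_def by blast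
  next
    case False
    then obtain K where K: "\<Gamma>1 = add_mset A K" "\<Gamma> = add_mset (Or c d) K" using horL(2) msplit by metis
    have l1: "dh S n (add_mset c K) A" using L K inv_or1 by metis
    have l2: "dh S n (add_mset d K) A" using L K inv_or2 by metis
    have r1: "dh S m' (add_mset A (add_mset c K)) C" using horL K by (simp add: add_mset_commute)
    have r2: "dh S m' (add_mset A (add_mset d K)) C" using horL K by (simp add: add_mset_commute)
    have 1: "derivable S (add_mset c K) C" using IH[OF _ l1 r1] horL by simp
    have 2: "derivable S (add_mset d K) C" using IH[OF _ l2 r2] horL by simp
    show ?thesis using derivable.orL[OF 1 2] K by simp
  qed
next
  case (hn m' a b \<Gamma>1)
  have hs: "has_n S" using hn by simp
  show ?thesis
  proof (cases "A = Neg a")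
    case True
    then have e: "\<Gamma>1 = \<Gamma>" using hn by simp
    have lb: "dh S n (add_mset b \<Gamma>) A" using L weak by blast
    have la: "dh S n (add_mset a \<Gamma>) A" using L weak by blast
    have r1: "dh S m' (add_mset A (add_mset b \<Gamma>)) a" using hn e True by (simp add: add_mset_commute)
    have r2: "dh S m' (add_mset A (add_mset a \<Gamma>)) b" using hn e True by (simp add: add_mset_commute)
    have X1: "derivable S (add_mset b \<Gamma>) a" using IH[OF _ lb r1] hn by simp
    have X2: "derivable S (add_mset a \<Gamma>) b" using IH[OF _ la r2] hn by simp
    have sa: "sub a A" using True by (simp add: sub_def)
    from LR True hs show ?thesis unfolding lastR_def
    proof (elim disjE exE conjE)
      fix g b' n' \<Gamma>'
      assume A0: "A = Neg b'" and G: "\<Gamma> = add_mset (Neg g) \<Gamma>'"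
        and L1: "dh S n' (add_mset (Neg g) (add_mset b' \<Gamma>')) g"
        and L2: "dh S n' (add_mset (Neg g) (add_mset g \<Gamma>')) b'"
      have A: "Neg a = Neg b'" using A0 True by simp
      have L1': "derivable S (add_mset a (add_mset b \<Gamma>)) g"
        using dweak[OF dh_derivable[OF L1], of b] A G by (simp add: add_mset_commute)
      have Y1: "derivable S (add_mset b \<Gamma>) g" using FIH[OF sa X1 L1'] .
      have L2': "derivable S (add_mset g \<Gamma>) a" using dh_derivable[OF L2] A G by (simp add: add_mset_commute)
      have X2': "derivable S (add_mset a (add_mset g \<Gamma>)) b" using dweak[OF X2, of g] by (simp add: add_mset_commute)
      have Y2: "derivable S (add_mset g \<Gamma>) b" using FIH[OF sa L2' X2'] .
      show ?thesis using derivable.n[OF hs, of g b \<Gamma>'] Y1 Y2 G hn by (simp add: add_mset_commute)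
    next
      fix g b' n' \<Gamma>'
      assume A0: "A = Neg b'" and G: "\<Gamma> = add_mset (Neg g) \<Gamma>'" and nf: "has_nef S"
        and L1: "dh S n' \<Gamma> g"
      have A: "Neg a = Neg b'" using A0 True by simp
      show ?thesis using derivable.nef[OF nf, of g \<Gamma>' b] dh_derivable[OF L1] G hn by simp
    qed (auto dest: sys_facts)
  next
    case False
    then obtain K where K: "\<Gamma>1 = add_mset A K" "\<Gamma> = add_mset (Neg a) K" using hn(2) msplit by metis
    have lb: "dh S n (add_mset b \<Gamma>) A" using L weak by blast
    have la: "dh S n (add_mset a \<Gamma>) A" using L weak by blast
    have r1: "dh S m' (add_mset A (add_mset b \<Gamma>)) a" using hn K by (simp add: add_mset_commute)
    have r2: "dh S m' (add_mset A (add_mset a \<Gamma>)) b" using hn K by (simp add: add_mset_commute)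
    have X1: "derivable S (add_mset b \<Gamma>) a" using IH[OF _ lb r1] hn by simp
    have X2: "derivable S (add_mset a \<Gamma>) b" using IH[OF _ la r2] hn by simp
    show ?thesis using derivable.n[OF hs, of a b K] X1 X2 K hn by (simp add: add_mset_commute)
  qed
next
  case (hnef m' a \<Gamma>1 b)
  have hs: "has_nef S" using hnef by simp
  show ?thesis
  proof (cases "A = Neg a")
    case True
    then have e: "\<Gamma>1 = \<Gamma>" using hnef by simp
    have r: "dh S m' (add_mset A \<Gamma>) a" using hnef e True by simp
    have X: "derivable S \<Gamma> a" using IH[OF _ L r] hnef by simp
    have sa: "sub a A" using True by (simp add: sub_def)
    from LR True hs show ?thesis unfolding lastR_def
    proof (elim disjE exE conjE)
      fix g b' n' \<Gamma>'
      assume A0: "A = Neg b'" and G: "\<Gamma> = add_mset (Neg g) \<Gamma>'"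
        and L1: "dh S n' (add_mset (Neg g) (add_mset b' \<Gamma>')) g"
      have A: "Neg a = Neg b'" using A0 True by simp
      have L1': "derivable S (add_mset a \<Gamma>) g"
        using dh_derivable[OF L1] A G by (simp add: add_mset_commute)
      have Y: "derivable S \<Gamma> g" using FIH[OF sa X L1'] .
      show ?thesis using derivable.nef[OF hs, of g \<Gamma>' b] Y G hnef by simp
    next
      fix g b' n' \<Gamma>'
      assume A0: "A = Neg b'" and G: "\<Gamma> = add_mset (Neg g) \<Gamma>'"
        and L1: "dh S n' \<Gamma> g"
      have A: "Neg a = Neg b'" using A0 True by simp
      show ?thesis using derivable.nef[OF hs, of g \<Gamma>' b] dh_derivable[OF L1] G hnef by simp
    qed (auto dest: sys_facts)
  next
    case False
    then obtain K where K: "\<Gamma>1 = add_mset A K" "\<Gamma> = add_mset (Neg a) K" using hnef(2) msplit by metis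
    have r: "dh S m' (add_mset A \<Gamma>) a" using hnef K by (simp add: add_mset_commute)
    have X: "derivable S \<Gamma> a" using IH[OF _ L r] hnef by simp
    show ?thesis using derivable.nef[OF hs, of a K b] X K hnef by simp
  qed
next
  case (hcopc m' a b \<Gamma>1)
  have hs: "has_copc S" using hcopc by simp
  show ?thesis
  proof (cases "A = Neg a")
    case True
    then have e: "\<Gamma>1 = \<Gamma>" using hcopc by simp
    have lb: "dh S n (add_mset b \<Gamma>) A" using L weak by blast
    have r1: "dh S m' (add_mset A (add_mset b \<Gamma>)) a" using hcopc e True by (simp add: add_mset_commute)
    have X1: "derivable S (add_mset b \<Gamma>) a" using IH[OF _ lb r1] hcopc by simp
    have sa: "sub a A" using True by (simp add: sub_def)
    from LR True hs show ?thesis unfolding lastR_def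
    proof (elim disjE exE conjE)
      fix g b' n' \<Gamma>'
      assume A0: "A = Neg b'" and G: "\<Gamma> = add_mset (Neg g) \<Gamma>'"
        and L1: "dh S n' (add_mset b' \<Gamma>) g"
      have A: "Neg a = Neg b'" using A0 True by simp
      have L1': "derivable S (add_mset a (add_mset b \<Gamma>)) g"
        using dweak[OF dh_derivable[OF L1], of b] A by (simp add: add_mset_commute)
      have Y: "derivable S (add_mset b \<Gamma>) g" using FIH[OF sa X1 L1'] .
      show ?thesis using derivable.copc[OF hs, of g b \<Gamma>'] Y G hcopc by (simp add: add_mset_commute)
    next
      fix b' n'
      assume A0: "A = Neg b'" and N: "n = Suc n'" and ha: "has_an S"
        and L1: "dh S n' (add_mset b' \<Gamma>) (Neg b')"
      have A: "Neg a = Neg b'" using A0 True by simp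
      have L1': "dh S n' (add_mset a \<Gamma>) A" using L1 A True by simp
      have R': "dh S m (add_mset A (add_mset a \<Gamma>)) C" using weak[OF R, of a] by (simp add: add_mset_commute)
      have Z: "derivable S (add_mset a \<Gamma>) (Neg b)" using IH[OF _ L1' R'] N hcopc by simp
      have Z': "derivable S (add_mset a (add_mset b \<Gamma>)) (Neg b)" using dweak[OF Z, of b] by (simp add: add_mset_commute)
      have "derivable S (add_mset b \<Gamma>) (Neg b)" using FIH[OF sa X1 Z'] .
      then show ?thesis using derivable.an[OF ha] hcopc by simp
    qed (auto dest: sys_facts)
  next
    case False
    then obtain K where K: "\<Gamma>1 = add_mset A K" "\<Gamma> = add_mset (Neg a) K" using hcopc(2) msplit by metis
    have lb: "dh S n (add_mset b \<Gamma>) A" using L weak by blast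
    have r1: "dh S m' (add_mset A (add_mset b \<Gamma>)) a" using hcopc K by (simp add: add_mset_commute)
    have X1: "derivable S (add_mset b \<Gamma>) a" using IH[OF _ lb r1] hcopc by simp
    show ?thesis using derivable.copc[OF hs, of a b K] X1 K hcopc by (simp add: add_mset_commute)
  qed
next
  case (han m' a)
  have hs: "has_an S" using han by simp
  have l: "dh S n (add_mset a \<Gamma>) A" using L weak by blast
  have r: "dh S m' (add_mset A (add_mset a \<Gamma>)) (Neg a)" using han by (simp add: add_mset_commute)
  have "derivable S (add_mset a \<Gamma>) (Neg a)" using IH[OF _ l r] han by simp
  then show ?thesis using derivable.an[OF hs] han by simp
qed

lemma cut_step:
  assumes FIH: "\<And>B \<Gamma>' C'. sub B A \<Longrightarrow> derivable S \<Gamma>' B \<Longrightarrow> derivable S (add_mset B \<Gamma>') C' \<Longrightarrow> derivable S \<Gamma>' C'"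
  shows "dh S n \<Gamma> A \<Longrightarrow> dh S m (add_mset A \<Gamma>) C \<Longrightarrow> derivable S \<Gamma> C"
proof (induction "n + m" arbitrary: n m \<Gamma> C rule: less_induct)
  case less
  have IH: "\<And>n' m' \<Gamma>' C'. n' + m' < n + m \<Longrightarrow> dh S n' \<Gamma>' A \<Longrightarrow> dh S m' (add_mset A \<Gamma>') C' \<Longrightarrow> derivable S \<Gamma>' C'"
    using less.hyps by blast
  have RA: "lastR S n \<Gamma> A \<Longrightarrow> derivable S \<Gamma> C"
    by (rule right_analysis[of n m S A \<Gamma> C, OF IH FIH less.prems(1) _ less.prems(2)])
  from less.prems(1) show ?case
  proof (cases rule: dh.cases)
    case (hax p \<Gamma>0)
    then have "dh S m (add_mset (Var p) (add_mset (Var p) \<Gamma>0)) C" using less.prems(2) by simp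
    then have "dh S m (add_mset (Var p) \<Gamma>0) C" by (rule contr)
    then show ?thesis using hax(1) dh_derivable by simp
  next
    case htop
    then have "dh S m (add_mset Top \<Gamma>) C" using less.prems(2) by simp
    then have "dh S m \<Gamma> C" by (rule inv_top)
    then show ?thesis by (rule dh_derivable)
  next
    case (himpR n' c d)
    have "lastR S n \<Gamma> A" unfolding lastR_def apply (rule disjI1) using himpR by blast
    then show ?thesis using RA by blast
  next
    case (himpL n' c d \<Gamma>0)
    have "dh S m (add_mset (Imp c d) (add_mset A \<Gamma>0)) C" using less.prems(2) himpL(2) by (simp add: add_mset_commute)
    then have "dh S m (add_mset d (add_mset A \<Gamma>0)) C" by (rule inv_imp)
    then have r: "dh S m (add_mset A (add_mset d \<Gamma>0)) C" by (simp add: add_mset_commute)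
    have "n' + m < n + m" using himpL(1) by simp
    then have "derivable S (add_mset d \<Gamma>0) C" using IH himpL(4) r by blast
    then show ?thesis using derivable.impL[OF dh_derivable[OF himpL(3)]] himpL(2) by simp
  next
    case (handR n' c d)
    have "lastR S n \<Gamma> A" unfolding lastR_def apply (rule disjI2, rule disjI1) using handR by blast
    then show ?thesis using RA by blast
  next
    case (handL n' c d \<Gamma>0)
    have "dh S m (add_mset (And c d) (add_mset A \<Gamma>0)) C" using less.prems(2) handL(2) by (simp add: add_mset_commute)
    then have "dh S m (add_mset c (add_mset d (add_mset A \<Gamma>0))) C" by (rule inv_and)
    then have r: "dh S m (add_mset A (add_mset c (add_mset d \<Gamma>0))) C" by (simp add: add_mset_commute)
    have "n' + m < n + m" using handL(1) by simp
    then have "derivable S (add_mset c (add_mset d \<Gamma>0)) C" using IH handL(3) r by blast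
    then show ?thesis using derivable.andL handL(2) by simp
  next
    case (horR1 n' c d)
    have "lastR S n \<Gamma> A" unfolding lastR_def apply (rule disjI2, rule disjI2, rule disjI1) using horR1 by blast
    then show ?thesis using RA by blast
  next
    case (horR2 n' d c)
    have "lastR S n \<Gamma> A" unfolding lastR_def apply (rule disjI2, rule disjI2, rule disjI1) using horR2 by blast
    then show ?thesis using RA by blast
  next
    case (horL n' c \<Gamma>0 d)
    have "dh S m (add_mset (Or c d) (add_mset A \<Gamma>0)) C" using less.prems(2) horL(2) by (simp add: add_mset_commute)
    then have "dh S m (add_mset c (add_mset A \<Gamma>0)) C" "dh S m (add_mset d (add_mset A \<Gamma>0)) C"
      by (rule inv_or1, rule inv_or2)
    then have r1: "dh S m (add_mset A (add_mset c \<Gamma>0)) C" and r2: "dh S m (add_mset A (add_mset d \<Gamma>0)) C"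
      by (simp_all add: add_mset_commute)
    have lt: "n' + m < n + m" using horL(1) by simp
    have 1: "derivable S (add_mset c \<Gamma>0) C" using IH[OF lt horL(3) r1] .
    have 2: "derivable S (add_mset d \<Gamma>0) C" using IH[OF lt horL(4) r2] .
    show ?thesis using derivable.orL[OF 1 2] horL(2) by simp
  next
    case (hn n' a b \<Gamma>0)
    have "lastR S n \<Gamma> A" unfolding lastR_def apply (rule disjI2, rule disjI2, rule disjI2, rule disjI1) using hn by blast
    then show ?thesis using RA by blast
  next
    case (hnef n' a \<Gamma>0 b)
    have "lastR S n \<Gamma> A" unfolding lastR_def apply (rule disjI2, rule disjI2, rule disjI2, rule disjI2, rule disjI1) using hnef by blast
    then show ?thesis using RA by blast
  next
    case (hcopc n' a b \<Gamma>0)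
    have hc: "dh S n' (add_mset b \<Gamma>) a" using hcopc by (simp add: add_mset_commute)
    have "lastR S n \<Gamma> A" unfolding lastR_def apply (rule disjI2, rule disjI2, rule disjI2, rule disjI2, rule disjI2, rule disjI1) using hcopc hc by blast
    then show ?thesis using RA by blast
  next
    case (han n' a)
    have "lastR S n \<Gamma> A" unfolding lastR_def apply (rule disjI2, rule disjI2, rule disjI2, rule disjI2, rule disjI2, rule disjI2) using han by blast
    then show ?thesis using RA by blast
  qed
qed

lemma cut_gen:
  assumes F: "\<And>B \<Gamma>' C'. sub B A \<Longrightarrow> derivable S \<Gamma>' B \<Longrightarrow> derivable S (add_mset B \<Gamma>') C' \<Longrightarrow> derivable S \<Gamma>' C'"
    and L: "derivable S \<Gamma> A" and R: "derivable S (add_mset A \<Gamma>) C"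
  shows "derivable S \<Gamma> C"
proof -
  obtain n where "dh S n \<Gamma> A" using L derivable_iff by blast
  moreover obtain m where "dh S m (add_mset A \<Gamma>) C" using R derivable_iff by blast
  ultimately show ?thesis using cut_step[where A=A and S=S] F by blast
qed

lemma cut: "derivable S \<Gamma> A \<Longrightarrow> derivable S (add_mset A \<Gamma>) C \<Longrightarrow> derivable S \<Gamma> C"
proof (induction A arbitrary: \<Gamma> C)
  case (Var x)
  show ?case by (rule cut_gen[OF _ Var.prems]) (simp add: sub_def)
next
  case Top
  show ?case by (rule cut_gen[OF _ Top.prems]) (simp add: sub_def)
next
  case (And A1 A2)
  show ?case by (rule cut_gen[OF _ And.prems]) (auto simp add: sub_def intro: And.IH)
next
  case (Or A1 A2)
  show ?case by (rule cut_gen[OF _ Or.prems]) (auto simp add: sub_def intro: Or.IH)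
next
  case (Imp A1 A2)
  show ?case by (rule cut_gen[OF _ Imp.prems]) (auto simp add: sub_def intro: Imp.IH)
next
  case (Neg A1)
  show ?case by (rule cut_gen[OF _ Neg.prems]) (auto simp add: sub_def intro: Neg.IH)
qed



context
  fixes A :: "'a nalg"
  assumes R: "rpc_lattice A"
begin

abbreviation "car \<equiv> carrier A"

lemma one_c: "one A \<in> car" using R unfolding rpc_lattice_def by blast
lemma meet_c: "x \<in> car \<Longrightarrow> y \<in> car \<Longrightarrow> meet A x y \<in> car" using R unfolding rpc_lattice_def by blast
lemma join_c: "x \<in> car \<Longrightarrow> y \<in> car \<Longrightarrow> join A x y \<in> car" using R unfolding rpc_lattice_def by blast
lemma imp_c: "x \<in> car \<Longrightarrow> y \<in> car \<Longrightarrow> imp A x y \<in> car" using R unfolding rpc_lattice_def by blast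
lemma neg_c: "x \<in> car \<Longrightarrow> neg A x \<in> car" using R unfolding rpc_lattice_def by blast
lemma massoc: "x \<in> car \<Longrightarrow> y \<in> car \<Longrightarrow> z \<in> car \<Longrightarrow> meet A x (meet A y z) = meet A (meet A x y) z"
  using R unfolding rpc_lattice_def by blast
lemma jassoc: "x \<in> car \<Longrightarrow> y \<in> car \<Longrightarrow> z \<in> car \<Longrightarrow> join A x (join A y z) = join A (join A x y) z"
  using R unfolding rpc_lattice_def by blast
lemma mcomm: "x \<in> car \<Longrightarrow> y \<in> car \<Longrightarrow> meet A x y = meet A y x" using R unfolding rpc_lattice_def by blast
lemma jcomm: "x \<in> car \<Longrightarrow> y \<in> car \<Longrightarrow> join A x y = join A y x" using R unfolding rpc_lattice_def by blast
lemma abs1: "x \<in> car \<Longrightarrow> y \<in> car \<Longrightarrow> meet A x (join A x y) = x" using R unfolding rpc_lattice_def by blast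
lemma abs2: "x \<in> car \<Longrightarrow> y \<in> car \<Longrightarrow> join A x (meet A x y) = x" using R unfolding rpc_lattice_def by blast
lemma le_one: "x \<in> car \<Longrightarrow> le A x (one A)" using R unfolding rpc_lattice_def by blast
lemma resid: "a \<in> car \<Longrightarrow> b \<in> car \<Longrightarrow> c \<in> car \<Longrightarrow> le A c (imp A a b) \<longleftrightarrow> le A (meet A c a) b"
  using R unfolding rpc_lattice_def by blast

lemma midem: "x \<in> car \<Longrightarrow> meet A x x = x"
  by (metis abs1 abs2 meet_c)

lemma le_refl: "x \<in> car \<Longrightarrow> le A x x" by (simp add: le_def midem)

lemma le_trans: "x \<in> car \<Longrightarrow> y \<in> car \<Longrightarrow> z \<in> car \<Longrightarrow> le A x y \<Longrightarrow> le A y z \<Longrightarrow> le A x z"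
  unfolding le_def by (metis massoc)

lemma le_antisym: "x \<in> car \<Longrightarrow> y \<in> car \<Longrightarrow> le A x y \<Longrightarrow> le A y x \<Longrightarrow> x = y"
  unfolding le_def by (metis mcomm)

lemma meet_l1: "x \<in> car \<Longrightarrow> y \<in> car \<Longrightarrow> le A (meet A x y) x"
  unfolding le_def by (metis massoc mcomm midem)

lemma meet_l2: "x \<in> car \<Longrightarrow> y \<in> car \<Longrightarrow> le A (meet A x y) y"
  unfolding le_def by (metis massoc midem)

lemma meet_glb: "x \<in> car \<Longrightarrow> y \<in> car \<Longrightarrow> z \<in> car \<Longrightarrow> le A z x \<Longrightarrow> le A z y \<Longrightarrow> le A z (meet A x y)"
  unfolding le_def by (metis massoc)

lemma join_u1: "x \<in> car \<Longrightarrow> y \<in> car \<Longrightarrow> le A x (join A x y)"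
  unfolding le_def by (metis abs1)

lemma join_u2: "x \<in> car \<Longrightarrow> y \<in> car \<Longrightarrow> le A y (join A x y)"
  unfolding le_def by (metis abs1 jcomm)

lemma le_join: "x \<in> car \<Longrightarrow> y \<in> car \<Longrightarrow> le A x y \<longleftrightarrow> join A x y = y"
  unfolding le_def by (metis abs1 abs2 jcomm mcomm)

lemma join_lub: "x \<in> car \<Longrightarrow> y \<in> car \<Longrightarrow> z \<in> car \<Longrightarrow> le A x z \<Longrightarrow> le A y z \<Longrightarrow> le A (join A x y) z"
  by (metis jassoc join_c le_join)

lemma mp: "a \<in> car \<Longrightarrow> b \<in> car \<Longrightarrow> c \<in> car \<Longrightarrow> le A c (imp A a b) \<Longrightarrow> le A c a \<Longrightarrow> le A c b"
  by (metis le_refl le_trans meet_c meet_glb resid)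

lemma le_meetI: "a \<in> car \<Longrightarrow> b \<in> car \<Longrightarrow> c \<in> car \<Longrightarrow> le A (meet A c a) b \<Longrightarrow> le A c (imp A a b)"
  using resid by blast

lemma eq_one_le: "x \<in> car \<Longrightarrow> y \<in> car \<Longrightarrow> imp A x y = one A \<Longrightarrow> le A x y"
proof -
  assume x: "x \<in> car" and y: "y \<in> car" and e: "imp A x y = one A"
  have "le A (one A) (imp A x y)" using e le_refl one_c by simp
  then have "le A (meet A (one A) x) y" using resid x y one_c by blast
  moreover have "meet A (one A) x = x" using le_one[OF x] x one_c mcomm unfolding le_def by metis
  ultimately show ?thesis by simp
qed

lemma le_eq_one: "x \<in> car \<Longrightarrow> y \<in> car \<Longrightarrow> le A x y \<Longrightarrow> imp A x y = one A"
proof -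
  assume x: "x \<in> car" and y: "y \<in> car" and l: "le A x y"
  have "meet A (one A) x = x" using le_one[OF x] x one_c mcomm unfolding le_def by metis
  then have "le A (one A) (imp A x y)" using resid x y one_c l by simp
  then show ?thesis using le_one imp_c x y one_c le_antisym by blast
qed

lemma eval_c: "(\<forall>p. v p \<in> car) \<Longrightarrow> eval A v \<phi> \<in> car"
  by (induction \<phi>) (auto intro: one_c meet_c join_c imp_c neg_c)

lemma conj_list_le: "(\<forall>p. v p \<in> car) \<Longrightarrow> c \<in> car \<Longrightarrow>
   le A c (eval A v (conj_list xs)) \<longleftrightarrow> (\<forall>x\<in>set xs. le A c (eval A v x))"
proof (induction xs rule: conj_list.induct)
  case 1
  then show ?case using le_one by simp
next
  case (2 a)
  then show ?case by simp
next
  case (3 a b xs)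
  have ea: "eval A v a \<in> car" and eb: "eval A v (conj_list (b # xs)) \<in> car" using eval_c 3 by auto
  have "le A c (meet A (eval A v a) (eval A v (conj_list (b # xs)))) \<longleftrightarrow>
        le A c (eval A v a) \<and> le A c (eval A v (conj_list (b # xs)))"
    using meet_glb meet_l1 meet_l2 le_trans meet_c ea eb 3(3) by meson
  then show ?case using 3 by auto
qed

end



lemma var_N: "variety S A \<Longrightarrow> N_algebra A"
  by (cases S) (auto simp: NeF_algebra_def CoPC_algebra_def CC_lattice_def)
lemma var_R: "variety S A \<Longrightarrow> rpc_lattice A"
  using var_N N_algebra_def by blast
lemma var_nef: "variety S A \<Longrightarrow> has_nef S \<Longrightarrow> NeF_algebra A"
  by (cases S) (auto simp: has_nef_def)
lemma var_copc: "variety S A \<Longrightarrow> has_copc S \<Longrightarrow> CoPC_algebra A"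
  by (cases S) (auto simp: has_copc_def CC_lattice_def)
lemma var_an: "variety S A \<Longrightarrow> has_an S \<Longrightarrow> CC_lattice A"
  by (cases S) (auto simp: has_an_def)

lemma sound_gen:
  "derivable S \<Gamma> \<phi> \<Longrightarrow> variety S A \<Longrightarrow> (\<forall>p. v p \<in> carrier A) \<Longrightarrow> c \<in> carrier A \<Longrightarrow>
   (\<forall>x\<in>#\<Gamma>. le A c (eval A v x)) \<Longrightarrow> le A c (eval A v \<phi>)"
proof (induction arbitrary: c rule: derivable.induct)
  case (ax p \<Gamma>)
  then show ?case by simp
next
  case (top \<Gamma>)
  then show ?case using le_one[OF var_R] by simp
next
  case (impR a \<Gamma> b)
  have R: "rpc_lattice A" using impR var_R by blast
  have ea: "eval A v a \<in> carrier A" and eb: "eval A v b \<in> carrier A" using eval_c[OF R] impR by auto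
  let ?c = "meet A c (eval A v a)"
  have cc: "?c \<in> carrier A" using meet_c[OF R] impR ea by blast
  have "\<forall>x\<in>#add_mset a \<Gamma>. le A ?c (eval A v x)"
  proof
    fix x assume "x \<in># add_mset a \<Gamma>"
    then have "x = a \<or> x \<in># \<Gamma>" by auto
    then show "le A ?c (eval A v x)"
    proof
      assume "x = a" then show ?thesis using meet_l2[OF R] impR ea by simp
    next
      assume "x \<in># \<Gamma>"
      then have "le A c (eval A v x)" using impR by blast
      moreover have "eval A v x \<in> carrier A" using eval_c[OF R] impR by blast
      ultimately show ?thesis using le_trans[OF R] meet_l1[OF R] impR ea cc by blast
    qed
  qed
  then have "le A ?c (eval A v b)" using impR cc by blast
  then show ?case using le_meetI[OF R] impR ea eb by simp
next
  case (impL a b \<Gamma> \<phi>)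
  have R: "rpc_lattice A" using impL var_R by blast
  have ea: "eval A v a \<in> carrier A" and eb: "eval A v b \<in> carrier A" using eval_c[OF R] impL by auto
  have 1: "le A c (eval A v a)" using impL by blast
  have 2: "le A c (imp A (eval A v a) (eval A v b))" using impL by simp
  have 3: "le A c (eval A v b)" using mp[OF R ea eb _ 2 1] impL by blast
  have "\<forall>x\<in>#add_mset b \<Gamma>. le A c (eval A v x)" using 3 impL by auto
  then show ?case using impL by blast
next
  case (andR \<Gamma> a b)
  have R: "rpc_lattice A" using andR var_R by blast
  show ?case using andR meet_glb[OF R] eval_c[OF R] by simp
next
  case (andL a b \<Gamma> \<phi>)
  have R: "rpc_lattice A" using andL var_R by blast
  have ea: "eval A v a \<in> carrier A" and eb: "eval A v b \<in> carrier A" using eval_c[OF R] andL by auto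
  have m: "le A c (meet A (eval A v a) (eval A v b))" using andL by simp
  have "le A c (eval A v a)" "le A c (eval A v b)"
    using le_trans[OF R _ _ _ m] meet_l1[OF R ea eb] meet_l2[OF R ea eb] meet_c[OF R ea eb] ea eb andL by blast+
  then have "\<forall>x\<in>#add_mset a (add_mset b \<Gamma>). le A c (eval A v x)" using andL by auto
  then show ?case using andL by blast
next
  case (orR1 \<Gamma> a b)
  have R: "rpc_lattice A" using orR1 var_R by blast
  have ea: "eval A v a \<in> carrier A" and eb: "eval A v b \<in> carrier A" using eval_c[OF R] orR1 by auto
  have "le A c (eval A v a)" using orR1 by blast
  moreover have "c \<in> carrier A" using orR1 by blast
  ultimately show ?case using le_trans[OF R _ ea join_c[OF R ea eb] _ join_u1[OF R ea eb]] by simp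
next
  case (orR2 \<Gamma> b a)
  have R: "rpc_lattice A" using orR2 var_R by blast
  have ea: "eval A v a \<in> carrier A" and eb: "eval A v b \<in> carrier A" using eval_c[OF R] orR2 by auto
  have "le A c (eval A v b)" using orR2 by blast
  moreover have "c \<in> carrier A" using orR2 by blast
  ultimately show ?case using le_trans[OF R _ eb join_c[OF R ea eb] _ join_u2[OF R ea eb]] by simp
next
  case (orL a \<Gamma> \<phi> b)
  have R: "rpc_lattice A" using orL var_R by blast
  have ea: "eval A v a \<in> carrier A" and eb: "eval A v b \<in> carrier A" and ep: "eval A v \<phi> \<in> carrier A"
    using eval_c[OF R] orL by auto
  have c: "c \<in> carrier A" using orL by blast
  have key: "\<And>d. d \<in> carrier A \<Longrightarrow> (\<And>\<Gamma>'. (\<forall>x\<in>#add_mset d' \<Gamma>'. True)) \<Longrightarrow> True" by simp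
  have ctx: "\<And>x. x \<in># \<Gamma> \<Longrightarrow> le A c (eval A v x)" using orL by auto
  have la: "le A (eval A v a) (imp A c (eval A v \<phi>))"
  proof -
    let ?c = "meet A c (eval A v a)"
    have cc: "?c \<in> carrier A" using meet_c[OF R c ea] .
    have "\<forall>x\<in>#add_mset a \<Gamma>. le A ?c (eval A v x)"
    proof
      fix x assume "x \<in># add_mset a \<Gamma>"
      then have "x = a \<or> x \<in># \<Gamma>" by auto
      then show "le A ?c (eval A v x)"
      proof
        assume "x = a" then show ?thesis using meet_l2[OF R c ea] by simp
      next
        assume "x \<in># \<Gamma>"
        then show ?thesis using ctx le_trans[OF R] meet_l1[OF R c ea] cc c eval_c[OF R] orL(6) by blast
      qed
    qed
    then have "le A ?c (eval A v \<phi>)" using orL cc by blast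
    then have "le A (meet A (eval A v a) c) (eval A v \<phi>)" using mcomm[OF R c ea] by simp
    then show ?thesis using resid[OF R c ep ea] by blast
  qed
  have lb: "le A (eval A v b) (imp A c (eval A v \<phi>))"
  proof -
    let ?c = "meet A c (eval A v b)"
    have cc: "?c \<in> carrier A" using meet_c[OF R c eb] .
    have "\<forall>x\<in>#add_mset b \<Gamma>. le A ?c (eval A v x)"
    proof
      fix x assume "x \<in># add_mset b \<Gamma>"
      then have "x = b \<or> x \<in># \<Gamma>" by auto
      then show "le A ?c (eval A v x)"
      proof
        assume "x = b" then show ?thesis using meet_l2[OF R c eb] by simp
      next
        assume "x \<in># \<Gamma>"
        then show ?thesis using ctx le_trans[OF R] meet_l1[OF R c eb] cc c eval_c[OF R] orL(6) by blast
      qed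
    qed
    then have "le A ?c (eval A v \<phi>)" using orL cc by blast
    then have "le A (meet A (eval A v b) c) (eval A v \<phi>)" using mcomm[OF R c eb] by simp
    then show ?thesis using resid[OF R c ep eb] by blast
  qed
  have ic: "imp A c (eval A v \<phi>) \<in> carrier A" using imp_c[OF R c ep] .
  have "le A (join A (eval A v a) (eval A v b)) (imp A c (eval A v \<phi>))"
    using join_lub[OF R ea eb ic la lb] .
  moreover have "le A c (join A (eval A v a) (eval A v b))" using orL by simp
  ultimately have "le A c (imp A c (eval A v \<phi>))" using le_trans[OF R c join_c[OF R ea eb] ic] by blast
  then show ?case using mp[OF R c ep c] le_refl[OF R c] by blast
next
  case (n a b \<Gamma>)
  have R: "rpc_lattice A" using n var_R by blast
  have NA: "N_algebra A" using n var_N by blast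
  have c: "c \<in> carrier A" using n by blast
  have ea: "eval A v a \<in> carrier A" and eb: "eval A v b \<in> carrier A" using eval_c[OF R] n by auto
  have ena: "neg A (eval A v a) \<in> carrier A" and enb: "neg A (eval A v b) \<in> carrier A" using neg_c[OF R] ea eb by auto
  have cna: "le A c (neg A (eval A v a))" using n by simp
  have ctx: "\<And>x. x \<in># \<Gamma> \<Longrightarrow> le A c (eval A v x)" using n by auto
  have h1: "le A c (imp A (eval A v b) (eval A v a))"
  proof -
    let ?c = "meet A c (eval A v b)"
    have cc: "?c \<in> carrier A" using meet_c[OF R c eb] .
    have "\<forall>x\<in>#add_mset (Neg a) (add_mset b \<Gamma>). le A ?c (eval A v x)"
    proof
      fix x assume "x \<in># add_mset (Neg a) (add_mset b \<Gamma>)"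
      then have "x = Neg a \<or> x = b \<or> x \<in># \<Gamma>" by auto
      moreover have "\<And>y. y \<in> carrier A \<Longrightarrow> le A c y \<Longrightarrow> le A ?c y"
        using le_trans[OF R] meet_l1[OF R c eb] cc c by blast
      ultimately show "le A ?c (eval A v x)" using ctx cna ena meet_l2[OF R c eb] eval_c[OF R] n(7) by auto
    qed
    then have "le A ?c (eval A v a)" using n cc by blast
    then show ?thesis using le_meetI[OF R eb ea c] by blast
  qed
  have h2: "le A c (imp A (eval A v a) (eval A v b))"
  proof -
    let ?c = "meet A c (eval A v a)"
    have cc: "?c \<in> carrier A" using meet_c[OF R c ea] .
    have "\<forall>x\<in>#add_mset (Neg a) (add_mset a \<Gamma>). le A ?c (eval A v x)"
    proof
      fix x assume "x \<in># add_mset (Neg a) (add_mset a \<Gamma>)"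
      then have "x = Neg a \<or> x = a \<or> x \<in># \<Gamma>" by auto
      moreover have "\<And>y. y \<in> carrier A \<Longrightarrow> le A c y \<Longrightarrow> le A ?c y"
        using le_trans[OF R] meet_l1[OF R c ea] cc c by blast
      ultimately show "le A ?c (eval A v x)" using ctx cna ena meet_l2[OF R c ea] eval_c[OF R] n(7) by auto
    qed
    then have "le A ?c (eval A v b)" using n cc by blast
    then show ?thesis using le_meetI[OF R ea eb c] by blast
  qed
  have i1: "imp A (eval A v a) (eval A v b) \<in> carrier A" and i2: "imp A (eval A v b) (eval A v a) \<in> carrier A"
    using imp_c[OF R] ea eb by auto
  have j1: "imp A (neg A (eval A v a)) (neg A (eval A v b)) \<in> carrier A" and j2: "imp A (neg A (eval A v b)) (neg A (eval A v a)) \<in> carrier A"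
    using imp_c[OF R] ena enb by auto
  let ?I1 = "iffA A (eval A v a) (eval A v b)" and ?I2 = "iffA A (neg A (eval A v a)) (neg A (eval A v b))"
  have I1: "?I1 \<in> carrier A" unfolding iffA_def using meet_c[OF R i1 i2] .
  have I2: "?I2 \<in> carrier A" unfolding iffA_def using meet_c[OF R j1 j2] .
  have k1: "le A c ?I1" unfolding iffA_def using meet_glb[OF R i1 i2 c h2 h1] .
  have ax: "imp A ?I1 ?I2 = one A" using NA ea eb unfolding N_algebra_def by blast
  have k2: "le A ?I1 ?I2" using eq_one_le[OF R I1 I2 ax] .
  have k3: "le A ?I2 (imp A (neg A (eval A v a)) (neg A (eval A v b)))"
    unfolding iffA_def using meet_l1[OF R j1 j2] .
  have "le A c ?I2" using le_trans[OF R c I1 I2 k1 k2] .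
  then have "le A c (imp A (neg A (eval A v a)) (neg A (eval A v b)))" using le_trans[OF R c I2 j1 _ k3] by blast
  then show ?case using mp[OF R ena enb c _ cna] by simp
next
  case (nef a \<Gamma> b)
  have R: "rpc_lattice A" using nef var_R by blast
  have NA: "NeF_algebra A" using nef var_nef by blast
  have c: "c \<in> carrier A" using nef by blast
  have ea: "eval A v a \<in> carrier A" and eb: "eval A v b \<in> carrier A" using eval_c[OF R] nef by auto
  have ena: "neg A (eval A v a) \<in> carrier A" and enb: "neg A (eval A v b) \<in> carrier A" using neg_c[OF R] ea eb by auto
  have cna: "le A c (neg A (eval A v a))" using nef by simp
  have ca: "le A c (eval A v a)" using nef by blast
  have "le A c (meet A (eval A v a) (neg A (eval A v a)))" using meet_glb[OF R ea ena c ca cna] .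
  moreover have "imp A (meet A (eval A v a) (neg A (eval A v a))) (neg A (eval A v b)) = one A"
    using NA ea eb unfolding NeF_algebra_def by blast
  then have "le A (meet A (eval A v a) (neg A (eval A v a))) (neg A (eval A v b))"
    using eq_one_le[OF R meet_c[OF R ea ena] enb] by blast
  ultimately show ?case using le_trans[OF R c meet_c[OF R ea ena] enb] by simp
next
  case (copc a b \<Gamma>)
  have R: "rpc_lattice A" using copc var_R by blast
  have CA: "CoPC_algebra A" using copc var_copc by blast
  have c: "c \<in> carrier A" using copc by blast
  have ea: "eval A v a \<in> carrier A" and eb: "eval A v b \<in> carrier A" using eval_c[OF R] copc by auto
  have ena: "neg A (eval A v a) \<in> carrier A" and enb: "neg A (eval A v b) \<in> carrier A" using neg_c[OF R] ea eb by auto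
  have cna: "le A c (neg A (eval A v a))" using copc by simp
  have ctx: "\<And>x. x \<in># \<Gamma> \<Longrightarrow> le A c (eval A v x)" using copc by auto
  have h1: "le A c (imp A (eval A v b) (eval A v a))"
  proof -
    let ?c = "meet A c (eval A v b)"
    have cc: "?c \<in> carrier A" using meet_c[OF R c eb] .
    have "\<forall>x\<in>#add_mset (Neg a) (add_mset b \<Gamma>). le A ?c (eval A v x)"
    proof
      fix x assume "x \<in># add_mset (Neg a) (add_mset b \<Gamma>)"
      then have "x = Neg a \<or> x = b \<or> x \<in># \<Gamma>" by auto
      moreover have "\<And>y. y \<in> carrier A \<Longrightarrow> le A c y \<Longrightarrow> le A ?c y"
        using le_trans[OF R] meet_l1[OF R c eb] cc c by blast
      ultimately show "le A ?c (eval A v x)" using ctx cna ena meet_l2[OF R c eb] eval_c[OF R] copc(5) by auto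
    qed
    then have "le A ?c (eval A v a)" using copc cc by blast
    then show ?thesis using le_meetI[OF R eb ea c] by blast
  qed
  have i2: "imp A (eval A v b) (eval A v a) \<in> carrier A" using imp_c[OF R] ea eb by auto
  have j: "imp A (neg A (eval A v a)) (neg A (eval A v b)) \<in> carrier A" using imp_c[OF R] ena enb by auto
  have "imp A (imp A (eval A v b) (eval A v a)) (imp A (neg A (eval A v a)) (neg A (eval A v b))) = one A"
    using CA ea eb unfolding CoPC_algebra_def by blast
  then have "le A (imp A (eval A v b) (eval A v a)) (imp A (neg A (eval A v a)) (neg A (eval A v b)))"
    using eq_one_le[OF R i2 j] by blast
  then have "le A c (imp A (neg A (eval A v a)) (neg A (eval A v b)))"
    using le_trans[OF R c i2 j h1] by blast
  then show ?case using mp[OF R ena enb c _ cna] by simp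
next
  case (an a \<Gamma>)
  have R: "rpc_lattice A" using an var_R by blast
  have CA: "CC_lattice A" using an var_an by blast
  have c: "c \<in> carrier A" using an by blast
  have ea: "eval A v a \<in> carrier A" using eval_c[OF R] an by auto
  have ena: "neg A (eval A v a) \<in> carrier A" using neg_c[OF R] ea by auto
  have ctx: "\<And>x. x \<in># \<Gamma> \<Longrightarrow> le A c (eval A v x)" using an by auto
  let ?c = "meet A c (eval A v a)"
  have cc: "?c \<in> carrier A" using meet_c[OF R c ea] .
  have "\<forall>x\<in>#add_mset a \<Gamma>. le A ?c (eval A v x)"
  proof
    fix x assume "x \<in># add_mset a \<Gamma>"
    then have "x = a \<or> x \<in># \<Gamma>" by auto
    moreover have "\<And>y. y \<in> carrier A \<Longrightarrow> le A c y \<Longrightarrow> le A ?c y"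
      using le_trans[OF R] meet_l1[OF R c ea] cc c by blast
    ultimately show "le A ?c (eval A v x)" using ctx meet_l2[OF R c ea] eval_c[OF R] an(5) by auto
  qed
  then have "le A ?c (neg A (eval A v a))" using an cc by simp
  then have h: "le A c (imp A (eval A v a) (neg A (eval A v a)))" using le_meetI[OF R ea ena c] by blast
  have i: "imp A (eval A v a) (neg A (eval A v a)) \<in> carrier A" using imp_c[OF R ea ena] .
  have "imp A (imp A (eval A v a) (neg A (eval A v a))) (neg A (eval A v a)) = one A"
    using CA ea unfolding CC_lattice_def by blast
  then have "le A (imp A (eval A v a) (neg A (eval A v a))) (neg A (eval A v a))"
    using eq_one_le[OF R i ena] by blast
  then show ?case using le_trans[OF R c i ena h] by simp
qed

lemma big_conj_ex: "\<exists>xs. mset xs = \<Gamma> \<and> big_conj \<Gamma> = conj_list xs"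
  unfolding big_conj_def by (metis (mono_tags) ex_mset someI_ex)

lemma soundness: "derivable S \<Gamma> \<phi> \<Longrightarrow> valid TYPE('a) S (Imp (big_conj \<Gamma>) \<phi>)"
  unfolding valid_def
proof (intro allI impI)
  fix A :: "'a nalg" and v :: "nat \<Rightarrow> 'a"
  assume d: "derivable S \<Gamma> \<phi>" and vA: "variety S A" and vv: "\<forall>p. v p \<in> carrier A"
  have R: "rpc_lattice A" using var_R vA by blast
  obtain xs where xs: "mset xs = \<Gamma>" "big_conj \<Gamma> = conj_list xs" using big_conj_ex by blast
  let ?P = "eval A v (conj_list xs)"
  have P: "?P \<in> carrier A" using eval_c[OF R vv] .
  have "\<forall>x\<in>set xs. le A ?P (eval A v x)" using conj_list_le[OF R vv P] le_refl[OF R P] by blast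
  then have "\<forall>x\<in>#\<Gamma>. le A ?P (eval A v x)" using xs(1) by auto
  then have "le A ?P (eval A v \<phi>)" using sound_gen[OF d vA vv P] by blast
  then show "eval A v (Imp (big_conj \<Gamma>) \<phi>) = one A"
    using le_eq_one[OF R P eval_c[OF R vv]] xs(2) by simp
qed



lemma idax: "derivable S (add_mset a \<Gamma>) a"
proof (induction a arbitrary: \<Gamma>)
  case (Var x)
  then show ?case by (rule derivable.ax)
next
  case Top
  then show ?case by (rule derivable.top)
next
  case (And a1 a2)
  have "derivable S (add_mset a1 (add_mset a2 \<Gamma>)) a1" using And.IH(1) .
  moreover have "derivable S (add_mset a1 (add_mset a2 \<Gamma>)) a2" using And.IH(2)[of "add_mset a1 \<Gamma>"] by (simp add: add_mset_commute)
  ultimately show ?case by (intro derivable.andL derivable.andR)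
next
  case (Or a1 a2)
  have "derivable S (add_mset a1 \<Gamma>) (Or a1 a2)" using Or.IH(1) by (rule derivable.orR1)
  moreover have "derivable S (add_mset a2 \<Gamma>) (Or a1 a2)" using Or.IH(2) by (rule derivable.orR2)
  ultimately show ?case by (rule derivable.orL)
next
  case (Imp a1 a2)
  have "derivable S (add_mset (Imp a1 a2) (add_mset a1 \<Gamma>)) a1" using Imp.IH(1)[of "add_mset (Imp a1 a2) \<Gamma>"] by (simp add: add_mset_commute)
  moreover have "derivable S (add_mset a2 (add_mset a1 \<Gamma>)) a2" using Imp.IH(2) .
  ultimately have "derivable S (add_mset (Imp a1 a2) (add_mset a1 \<Gamma>)) a2" by (rule derivable.impL)
  then show ?case by (intro derivable.impR) (simp add: add_mset_commute)
next
  case (Neg a)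
  have p: "derivable S (add_mset (Neg a) (add_mset a \<Gamma>)) a" using Neg.IH[of "add_mset (Neg a) \<Gamma>"] by (simp add: add_mset_commute)
  have "has_n S \<or> has_copc S" by (cases S) (auto simp: has_n_def has_copc_def)
  then show ?case
  proof
    assume "has_n S" then show ?thesis using derivable.n p p by blast
  next
    assume "has_copc S" then show ?thesis using derivable.copc p by blast
  qed
qed

lemma mem_ax: "a \<in># \<Gamma> \<Longrightarrow> derivable S \<Gamma> a"
  by (metis idax multi_member_split)

lemma dweak_plus: "derivable S \<Gamma> \<phi> \<Longrightarrow> derivable S (M + \<Gamma>) \<phi>"
  by (induction M) (auto intro: dweak)

lemma dweak_sub: "derivable S \<Gamma> \<phi> \<Longrightarrow> \<Gamma> \<subseteq># \<Delta> \<Longrightarrow> derivable S \<Delta> \<phi>"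
  by (metis dweak_plus subset_mset.diff_add)

lemma neg_rule: "derivable S (add_mset b \<Gamma>) a \<Longrightarrow> derivable S (add_mset a \<Gamma>) b \<Longrightarrow> derivable S (add_mset (Neg a) \<Gamma>) (Neg b)"
proof -
  assume 1: "derivable S (add_mset b \<Gamma>) a" and 2: "derivable S (add_mset a \<Gamma>) b"
  have p1: "derivable S (add_mset (Neg a) (add_mset b \<Gamma>)) a" using dweak[OF 1] .
  have p2: "derivable S (add_mset (Neg a) (add_mset a \<Gamma>)) b" using dweak[OF 2] .
  have "has_n S \<or> has_copc S" by (cases S) (auto simp: has_n_def has_copc_def)
  then show ?thesis
  proof
    assume "has_n S" then show ?thesis using derivable.n p1 p2 by blast
  next
    assume "has_copc S" then show ?thesis using derivable.copc p1 by blast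
  qed
qed

definition lf :: "system \<Rightarrow> form \<Rightarrow> form \<Rightarrow> bool" where
  "lf S a b \<longleftrightarrow> derivable S {#a#} b"

definition eqv :: "system \<Rightarrow> form \<Rightarrow> form \<Rightarrow> bool" where
  "eqv S a b \<longleftrightarrow> lf S a b \<and> lf S b a"

lemma lf_refl: "lf S a a" unfolding lf_def using idax[of S a "{#}"] by simp

lemma lf_trans: "lf S a b \<Longrightarrow> lf S b c \<Longrightarrow> lf S a c"
  unfolding lf_def
proof -
  assume 1: "derivable S {#a#} b" and 2: "derivable S {#b#} c"
  have "derivable S (add_mset b {#a#}) c" using dweak[OF 2, of a] by (simp add: add_mset_commute)
  then show "derivable S {#a#} c" using cut 1 by blast
qed

lemma and_l1: "lf S (And a b) a" unfolding lf_def
  by (rule derivable.andL[of S a b "{#}", simplified]) (rule mem_ax, simp)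
lemma and_l2: "lf S (And a b) b" unfolding lf_def
  by (rule derivable.andL[of S a b "{#}", simplified]) (rule mem_ax, simp)
lemma and_glb: "lf S c a \<Longrightarrow> lf S c b \<Longrightarrow> lf S c (And a b)" unfolding lf_def
  by (rule derivable.andR)
lemma or_u1: "lf S a (Or a b)" unfolding lf_def by (rule derivable.orR1, rule mem_ax, simp)
lemma or_u2: "lf S b (Or a b)" unfolding lf_def by (rule derivable.orR2, rule mem_ax, simp)
lemma or_lub: "lf S a c \<Longrightarrow> lf S b c \<Longrightarrow> lf S (Or a b) c" unfolding lf_def
  using derivable.orL[of S a "{#}" c b] by simp
lemma top_u: "lf S a Top" unfolding lf_def by (rule derivable.top)

lemma lf_resid: "lf S c (Imp a b) \<longleftrightarrow> lf S (And c a) b"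
proof
  assume "lf S c (Imp a b)"
  then have 1: "derivable S {#c#} (Imp a b)" unfolding lf_def .
  have p1: "derivable S {#a, c#} (Imp a b)" using dweak[OF 1, of a] by simp
  have "derivable S (add_mset (Imp a b) {#a, c#}) a" by (rule mem_ax) simp
  moreover have "derivable S (add_mset b {#a, c#}) b" by (rule mem_ax) simp
  ultimately have "derivable S (add_mset (Imp a b) {#a, c#}) b" by (rule derivable.impL)
  then have "derivable S {#a, c#} b" using cut p1 by blast
  then have "derivable S (add_mset c (add_mset a {#})) b" by (simp add: add_mset_commute)
  then show "lf S (And c a) b" unfolding lf_def using derivable.andL by fastforce
next
  assume "lf S (And c a) b"
  then have 1: "derivable S {#And c a#} b" unfolding lf_def .
  have p1: "derivable S (add_mset (And c a) {#a, c#}) b" using dweak_sub[OF 1] by simp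
  have "derivable S {#a, c#} (And c a)" by (rule derivable.andR; rule mem_ax; simp)
  then have "derivable S {#a, c#} b" using cut p1 by blast
  then show "lf S c (Imp a b)" unfolding lf_def by (intro derivable.impR) simp
qed

lemma lf_imp_mp: "lf S (And (Imp a b) a) b"
  using lf_resid lf_refl by blast

lemma and_mono: "lf S a a' \<Longrightarrow> lf S b b' \<Longrightarrow> lf S (And a b) (And a' b')"
  by (meson and_glb and_l1 and_l2 lf_trans)
lemma or_mono: "lf S a a' \<Longrightarrow> lf S b b' \<Longrightarrow> lf S (Or a b) (Or a' b')"
  by (meson or_lub or_u1 or_u2 lf_trans)
lemma imp_mono: "lf S a' a \<Longrightarrow> lf S b b' \<Longrightarrow> lf S (Imp a b) (Imp a' b')"
proof -
  assume 1: "lf S a' a" and 2: "lf S b b'"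
  have "lf S (And (Imp a b) a') (And (Imp a b) a)" using and_mono[OF lf_refl 1] .
  then have "lf S (And (Imp a b) a') b'" using lf_imp_mp 2 lf_trans by blast
  then show ?thesis using lf_resid by blast
qed
lemma neg_cong: "eqv S a b \<Longrightarrow> lf S (Neg a) (Neg b)"
  unfolding eqv_def lf_def
proof -
  assume "derivable S {#a#} b \<and> derivable S {#b#} a"
  then show "derivable S {#Neg a#} (Neg b)" using neg_rule[of S b "{#}" a] by simp
qed

lemma eqv_refl: "eqv S a a" by (simp add: eqv_def lf_refl)
lemma eqv_sym: "eqv S a b \<Longrightarrow> eqv S b a" by (simp add: eqv_def)
lemma eqv_trans: "eqv S a b \<Longrightarrow> eqv S b c \<Longrightarrow> eqv S a c" unfolding eqv_def using lf_trans by blast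

instance form :: countable by countable_datatype

definition cls :: "system \<Rightarrow> form \<Rightarrow> form set" where "cls S a = {b. eqv S a b}"
definition EE :: "system \<Rightarrow> form \<Rightarrow> nat set" where "EE S a = to_nat ` cls S a"

lemma cls_eq: "cls S a = cls S b \<longleftrightarrow> eqv S a b"
proof
  assume h: "cls S a = cls S b"
  have "b \<in> cls S b" by (simp add: cls_def eqv_refl)
  then show "eqv S a b" using h unfolding cls_def by blast
next
  assume h: "eqv S a b"
  show "cls S a = cls S b" unfolding cls_def using h eqv_sym eqv_trans by blast
qed

lemma EE_eq: "EE S a = EE S b \<longleftrightarrow> eqv S a b"
  unfolding EE_def using inj_image_eq_iff[OF inj_to_nat, of "cls S a" "cls S b"] cls_eq by simp

definition rep :: "system \<Rightarrow> nat set \<Rightarrow> form" where "rep S x = (SOME a. x = EE S a)"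

lemma rep_E: "eqv S (rep S (EE S a)) a"
proof -
  have "EE S a = EE S (rep S (EE S a))" unfolding rep_def by (rule someI) (rule refl)
  then show ?thesis using EE_eq eqv_sym by metis
qed

definition LA :: "system \<Rightarrow> nat set nalg" where
  "LA S = \<lparr>carrier = range (EE S),
           meet = (\<lambda>x y. EE S (And (rep S x) (rep S y))),
           join = (\<lambda>x y. EE S (Or (rep S x) (rep S y))),
           imp = (\<lambda>x y. EE S (Imp (rep S x) (rep S y))),
           one = EE S Top,
           neg = (\<lambda>x. EE S (Neg (rep S x)))\<rparr>"

lemma LA_simps:
  "carrier (LA S) = range (EE S)"
  "one (LA S) = EE S Top"
  "meet (LA S) (EE S a) (EE S b) = EE S (And a b)"
  "join (LA S) (EE S a) (EE S b) = EE S (Or a b)"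
  "imp (LA S) (EE S a) (EE S b) = EE S (Imp a b)"
  "neg (LA S) (EE S a) = EE S (Neg a)"
proof -
  have ra: "eqv S (rep S (EE S a)) a" and rb: "eqv S (rep S (EE S b)) b" using rep_E by auto
  show "carrier (LA S) = range (EE S)" "one (LA S) = EE S Top" by (simp_all add: LA_def)
  show "meet (LA S) (EE S a) (EE S b) = EE S (And a b)"
    using ra rb by (simp add: LA_def EE_eq eqv_def and_mono)
  show "join (LA S) (EE S a) (EE S b) = EE S (Or a b)"
    using ra rb by (simp add: LA_def EE_eq eqv_def or_mono)
  show "imp (LA S) (EE S a) (EE S b) = EE S (Imp a b)"
    using ra rb by (simp add: LA_def EE_eq eqv_def imp_mono)
  show "neg (LA S) (EE S a) = EE S (Neg a)"
    using ra by (simp add: LA_def EE_eq eqv_def neg_cong eqv_sym)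
qed

lemma LA_le: "le (LA S) (EE S a) (EE S b) \<longleftrightarrow> lf S a b"
  unfolding le_def LA_simps EE_eq eqv_def
  using and_l1 and_glb[OF lf_refl] lf_trans[OF _ and_l2] by blast

lemma ball_range: "(\<forall>x\<in>range f. P x) \<longleftrightarrow> (\<forall>a. P (f a))" by auto

lemma thm_top: "derivable S {#} X \<Longrightarrow> EE S X = EE S Top"
  unfolding EE_eq eqv_def lf_def using dweak[of S "{#}" X Top] derivable.top by simp

lemma LA_rpc: "rpc_lattice (LA S)"
  unfolding rpc_lattice_def ball_range LA_simps LA_le
  apply (intro conjI allI)
  apply (simp_all add: EE_eq eqv_def lf_resid top_u rangeI)
  subgoal using and_glb[OF and_glb[OF and_l1 lf_trans[OF and_l2 and_l1]] lf_trans[OF and_l2 and_l2]]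
      and_glb[OF lf_trans[OF and_l1 and_l1] and_glb[OF lf_trans[OF and_l1 and_l2] and_l2]] by blast
  subgoal using or_lub[OF lf_trans[OF or_u1 or_u1] or_lub[OF lf_trans[OF or_u2 or_u1] or_u2]]
      or_lub[OF or_lub[OF or_u1 lf_trans[OF or_u1 or_u2]] lf_trans[OF or_u2 or_u2]] by blast
  subgoal using and_glb[OF and_l2 and_l1] by blast
  subgoal using or_lub[OF or_u2 or_u1] by blast
  subgoal using and_l1 and_glb[OF lf_refl or_u1] by blast
  subgoal using or_u1 or_lub[OF lf_refl and_l1] by blast
  done


lemma impL_m: "Imp a b \<in># \<Gamma> \<Longrightarrow> derivable S \<Gamma> a \<Longrightarrow> derivable S (add_mset b (\<Gamma> - {#Imp a b#})) \<phi> \<Longrightarrow> derivable S \<Gamma> \<phi>"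
  by (metis derivable.impL insert_DiffM)

lemma eval_LA: "eval (LA S) (\<lambda>p. EE S (Var p)) \<phi> = EE S \<phi>"
  by (induction \<phi>) (simp_all add: LA_simps)

lemma axN: "derivable S {#} (Imp (And (Imp a b) (Imp b a)) (And (Imp (Neg a) (Neg b)) (Imp (Neg b) (Neg a))))"
proof -
  let ?G = "{#Imp a b, Imp b a#}"
  have d1: "derivable S (add_mset b ?G) a"
    by (rule impL_m[of b a]) (auto intro: mem_ax)
  have d2: "derivable S (add_mset a ?G) b"
    by (rule impL_m[of a b]) (auto intro: mem_ax)
  have "derivable S ?G (Imp (Neg a) (Neg b))" using neg_rule[OF d1 d2] by (rule derivable.impR)
  moreover have "derivable S ?G (Imp (Neg b) (Neg a))" using neg_rule[OF d2 d1] by (rule derivable.impR)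
  ultimately have "derivable S ?G (And (Imp (Neg a) (Neg b)) (Imp (Neg b) (Neg a)))" by (rule derivable.andR)
  then have "derivable S {#And (Imp a b) (Imp b a)#} (And (Imp (Neg a) (Neg b)) (Imp (Neg b) (Neg a)))"
    using derivable.andL[of S "Imp a b" "Imp b a" "{#}"] by simp
  then show ?thesis by (intro derivable.impR) simp
qed

lemma axNeF: "has_nef S \<Longrightarrow> derivable S {#} (Imp (And p (Neg p)) (Neg q))"
proof -
  assume h: "has_nef S"
  have "derivable S (add_mset (Neg p) {#p#}) p" by (rule mem_ax) simp
  then have "derivable S (add_mset (Neg p) {#p#}) (Neg q)" by (rule derivable.nef[OF h])
  then have "derivable S (add_mset p (add_mset (Neg p) {#})) (Neg q)" by (simp add: add_mset_commute)
  then have "derivable S {#And p (Neg p)#} (Neg q)" using derivable.andL by fastforce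
  then show ?thesis by (intro derivable.impR) simp
qed

lemma axCoPC: "has_copc S \<Longrightarrow> derivable S {#} (Imp (Imp p q) (Imp (Neg q) (Neg p)))"
proof -
  assume h: "has_copc S"
  have "derivable S (add_mset (Neg q) (add_mset p {#Imp p q#})) q"
    by (rule impL_m[of p q]) (auto intro: mem_ax)
  then have "derivable S (add_mset (Neg q) {#Imp p q#}) (Neg p)" by (rule derivable.copc[OF h])
  then show ?thesis by (intro derivable.impR) simp
qed

lemma axCC: "has_an S \<Longrightarrow> derivable S {#} (Imp (Imp p (Neg p)) (Neg p))"
proof -
  assume h: "has_an S"
  have "derivable S (add_mset p {#Imp p (Neg p)#}) (Neg p)"
    by (rule impL_m[of p "Neg p"]) (auto intro: mem_ax)
  then have "derivable S {#Imp p (Neg p)#} (Neg p)" by (rule derivable.an[OF h])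
  then show ?thesis by (intro derivable.impR) simp
qed

lemma LA_N: "N_algebra (LA S)"
  unfolding N_algebra_def ball_range LA_simps iffA_def
  using LA_rpc thm_top[OF axN] by simp

lemma LA_variety: "variety S (LA S)"
proof (cases S)
  case G3N
  then show ?thesis using LA_N by simp
next
  case G3NeF
  then have h: "has_nef S" by (simp add: has_nef_def)
  show ?thesis using G3NeF LA_N thm_top[OF axNeF[OF h]] by (simp add: NeF_algebra_def ball_range LA_simps)
next
  case G3CoPC
  then have h: "has_copc S" by (simp add: has_copc_def)
  show ?thesis using G3CoPC LA_N thm_top[OF axCoPC[OF h]] by (simp add: CoPC_algebra_def ball_range LA_simps)
next
  case G3MPC
  then have h: "has_copc S" "has_an S" by (simp_all add: has_copc_def has_an_def)
  show ?thesis using G3MPC LA_N thm_top[OF axCoPC[OF h(1)]] thm_top[OF axCC[OF h(2)]] by (simp add: CC_lattice_def CoPC_algebra_def ball_range LA_simps)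
qed

lemma conj_deriv: "derivable S (mset xs) (conj_list xs)"
proof (induction xs rule: conj_list.induct)
  case 1
  then show ?case by (simp add: derivable.top)
next
  case (2 a)
  then show ?case by (simp add: mem_ax)
next
  case (3 a b xs)
  have "derivable S (add_mset a (mset (b # xs))) a" by (rule mem_ax) simp
  moreover have "derivable S (add_mset a (mset (b # xs))) (conj_list (b # xs))" using dweak[OF 3] .
  ultimately show ?case using derivable.andR by simp
qed

lemma completeness: "valid TYPE(nat set) S (Imp (big_conj \<Gamma>) \<phi>) \<Longrightarrow> derivable S \<Gamma> \<phi>"
proof -
  assume v: "valid TYPE(nat set) S (Imp (big_conj \<Gamma>) \<phi>)"
  have "eval (LA S) (\<lambda>p. EE S (Var p)) (Imp (big_conj \<Gamma>) \<phi>) = one (LA S)"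
    using v LA_variety unfolding valid_def by (simp add: LA_simps)
  then have "EE S (Imp (big_conj \<Gamma>) \<phi>) = EE S Top" by (simp add: eval_LA LA_simps)
  then have "derivable S {#Top#} (Imp (big_conj \<Gamma>) \<phi>)" by (simp add: EE_eq eqv_def lf_def)
  then have "derivable S {#} (Imp (big_conj \<Gamma>) \<phi>)" using cut[OF derivable.top[of S "{#}"]] by simp
  then have 1: "derivable S \<Gamma> (Imp (big_conj \<Gamma>) \<phi>)" using dweak_plus[of S "{#}" _ \<Gamma>] by simp
  obtain xs where xs: "mset xs = \<Gamma>" "big_conj \<Gamma> = conj_list xs"
    unfolding big_conj_def by (metis (mono_tags) ex_mset someI_ex)
  have 2: "derivable S \<Gamma> (big_conj \<Gamma>)" using conj_deriv[of S xs] xs by simp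
  have "derivable S (add_mset (Imp (big_conj \<Gamma>) \<phi>) \<Gamma>) (big_conj \<Gamma>)" using dweak[OF 2] .
  moreover have "derivable S (add_mset \<phi> \<Gamma>) \<phi>" by (rule idax)
  ultimately have "derivable S (add_mset (Imp (big_conj \<Gamma>) \<phi>) \<Gamma>) \<phi>" by (rule derivable.impL)
  then show ?thesis using cut[OF 1] by blast
qed


theorem theorem3p3:
  fixes S :: system and \<Gamma> :: "form multiset" and \<phi> :: form
  shows "(derivable S \<Gamma> \<phi> \<longrightarrow> valid TYPE('a) S (Imp (big_conj \<Gamma>) \<phi>))
       \<and> (valid TYPE(nat set) S (Imp (big_conj \<Gamma>) \<phi>) \<longrightarrow> derivable S \<Gamma> \<phi>)"
  using soundness completeness by blast

end
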